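(* Let $u\in\mathbb{R}^d$. There exists $C>0$ such that for every disorder configuration $\xi\in\mathbb{R}^{\mathbb{Z}^d}$, all $a=(a_i),l=(l_i)\in\mathbb{Z}^d$ with $a_i<l_i$ for $i=1,\dots,d$, and every $l_1'\in\mathbb{Z}$ with $a_1<l_1'<l_1$, $$-\log Z^{\psi_u}_{\bar\Lambda^{a,l}}[\xi]\le-\log Z^{\psi_u}_{\bar\Lambda^{a,l}_{[a_1,l_1'-1]}}[\xi]-\log Z^{\psi_u}_{\bar\Lambda^{a,l}_{[l_1'+1,l_1]}}[\xi]-\prod_{i=2}^d(l_i-a_i+1)\Big(\log C-\sum_{i=2}^dV(u_i)\Big)-\sum_{x\in\bar\Lambda^{a,l}_{l_1'}}u\cdot(l_1',x_2,\dots,x_d)\,\xi(x).$$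
   Context: $V\in C^2(\mathbb{R})$ is even, with $V(s)\ge As^2-B$ for all $s$ (some $A>0$, $B\in\mathbb{R}$) and $V''(s)\le C_2$ for all $s$ (some $C_2>0$). For finite $\Lambda\subset\mathbb{Z}^d$, $\partial\Lambda=\{x\notin\Lambda:\|x-y\|_1=1\text{ for some }y\in\Lambda\}$. For $\psi\in\mathbb{R}^{\mathbb{Z}^d}$ and $\xi\in\mathbb{R}^{\mathbb{Z}^d}$, $$H^\psi_\Lambda[\xi](\phi)=\tfrac12\sum_{x,y\in\Lambda,|x-y|=1}V(\phi(x)-\phi(y))+\sum_{x\in\Lambda,y\in\partial\Lambda,|x-y|=1}V(\phi(x)-\psi(y))-\sum_{x\in\Lambda}\xi(x)\phi(x)$$ (sums over ordered nearest-neighbour pairs), and $Z^\psi_\Lambda[\xi]=\int_{\mathbb{R}^\Lambda}\exp(-H^\psi_\Lambda[\xi](\phi))\prod_{x\in\Lambda}\mathrm{d}\phi(x)$. Here $\psi_u(x)=x\cdot u$. For $a,l\in\mathbb{Z}^d$, $\bar\Lambda^{a,l}=\{z\in\mathbb{Z}^d:a_i\le z_i\le l_i,\ i=1,\dots,d\}$; for integers $s\le t$, $\bar\Lambda^{a,l}_{[s,t]}=\{z:s\le z_1\le t,\ a_i\le z_i\le l_i\ (i\ge2)\}$ and $\bar\Lambda^{a,l}_{s}=\{z:z_1=s,\ a_i\le z_i\le l_i\ (i\ge2)\}$. *)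

theory Defs
  imports "HOL-Analysis.Analysis"
begin

text \<open>Sites of the lattice Z^d are represented as functions nat => int whose
coordinates 1..d are the meaningful ones and which vanish outside {1..d}.\<close>

type_synonym site = "nat \<Rightarrow> int"

definition lattice :: "nat \<Rightarrow> site set" where
  "lattice d = {z. \<forall>i. i \<notin> {1..d} \<longrightarrow> z i = 0}"

definition adj :: "nat \<Rightarrow> site \<Rightarrow> site \<Rightarrow> bool" where
  "adj d x y \<longleftrightarrow> (\<Sum>i=1..d. \<bar>x i - y i\<bar>) = 1"

definition bdry :: "nat \<Rightarrow> site set \<Rightarrow> site set" where
  "bdry d \<Lambda> = {x \<in> lattice d. x \<notin> \<Lambda> \<and> (\<exists>y\<in>\<Lambda>. adj d x y)}"

definition Ham :: "nat \<Rightarrow> (real \<Rightarrow> real) \<Rightarrow> site set \<Rightarrow> (site \<Rightarrow> real) \<Rightarrow> (site \<Rightarrow> real)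
    \<Rightarrow> (site \<Rightarrow> real) \<Rightarrow> real" where
  "Ham d V \<Lambda> \<psi> \<xi> \<phi> =
     1/2 * (\<Sum>x\<in>\<Lambda>. \<Sum>y\<in>\<Lambda>. if adj d x y then V (\<phi> x - \<phi> y) else 0)
   + (\<Sum>x\<in>\<Lambda>. \<Sum>y\<in>bdry d \<Lambda>. if adj d x y then V (\<phi> x - \<psi> y) else 0)
   - (\<Sum>x\<in>\<Lambda>. \<xi> x * \<phi> x)"

definition Zpart :: "nat \<Rightarrow> (real \<Rightarrow> real) \<Rightarrow> site set \<Rightarrow> (site \<Rightarrow> real) \<Rightarrow> (site \<Rightarrow> real) \<Rightarrow> real" where
  "Zpart d V \<Lambda> \<psi> \<xi> = integral\<^sup>L (PiM \<Lambda> (\<lambda>_. lborel)) (\<lambda>\<phi>. exp (- Ham d V \<Lambda> \<psi> \<xi> \<phi>))"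

definition psi :: "nat \<Rightarrow> (nat \<Rightarrow> real) \<Rightarrow> site \<Rightarrow> real" where
  "psi d u x = (\<Sum>i=1..d. real_of_int (x i) * u i)"

definition box :: "nat \<Rightarrow> site \<Rightarrow> site \<Rightarrow> site set" where
  "box d a l = {z \<in> lattice d. \<forall>i\<in>{1..d}. a i \<le> z i \<and> z i \<le> l i}"

definition box_strip :: "nat \<Rightarrow> site \<Rightarrow> site \<Rightarrow> int \<Rightarrow> int \<Rightarrow> site set" where
  "box_strip d a l s t = {z \<in> lattice d. s \<le> z 1 \<and> z 1 \<le> t \<and> (\<forall>i\<in>{2..d}. a i \<le> z i \<and> z i \<le> l i)}"

definition box_slice :: "nat \<Rightarrow> site \<Rightarrow> site \<Rightarrow> int \<Rightarrow> site set" where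
  "box_slice d a l s = {z \<in> lattice d. z 1 = s \<and> (\<forall>i\<in>{2..d}. a i \<le> z i \<and> z i \<le> l i)}"

end

theory Submission imports Defs "HOL-Probability.Distributions" begin

definition nbr :: "nat \<Rightarrow> site \<Rightarrow> site set" where
  "nbr d x = {y \<in> lattice d. adj d x y}"

lemma adj_sym: "adj d x y = adj d y x"
  unfolding adj_def by (simp add: abs_minus_commute)

lemma adj_le1: "adj d x y \<Longrightarrow> i \<in> {1..d} \<Longrightarrow> \<bar>x i - y i\<bar> \<le> 1"
proof -
  assume a: "adj d x y" and i: "i \<in> {1..d}"
  have "\<bar>x i - y i\<bar> \<le> (\<Sum>i=1..d. \<bar>x i - y i\<bar>)" by (rule member_le_sum[OF i]) auto
  with a show ?thesis by (simp add: adj_def)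
qed

lemma adj_char:
  assumes x: "x \<in> lattice d" and y: "y \<in> lattice d" and a: "adj d x y"
  shows "\<exists>i\<in>{1..d}. \<exists>s\<in>{-1,1}. y = x(i := x i + s)"
proof -
  have S: "(\<Sum>i=1..d. \<bar>x i - y i\<bar>) = 1" using a by (simp add: adj_def)
  obtain i where i: "i \<in> {1..d}" "\<bar>x i - y i\<bar> \<noteq> 0"
  proof (rule ccontr)
    assume "\<not> thesis"
    with that have "\<forall>i\<in>{1..d}. \<bar>x i - y i\<bar> = 0" by blast
    then have "(\<Sum>i=1..d. \<bar>x i - y i\<bar>) = 0" by simp
    with S show False by simp
  qed
  have split: "(\<Sum>i=1..d. \<bar>x i - y i\<bar>) = \<bar>x i - y i\<bar> + (\<Sum>j\<in>{1..d}-{i}. \<bar>x j - y j\<bar>)"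
    using i(1) by (simp add: sum.remove)
  have nn: "(\<Sum>j\<in>{1..d}-{i}. \<bar>x j - y j\<bar>) \<ge> 0" by (simp add: sum_nonneg)
  have "\<bar>x i - y i\<bar> \<le> 1" using adj_le1[OF a i(1)] .
  with i(2) have e1: "\<bar>x i - y i\<bar> = 1" by simp
  with S split have "(\<Sum>j\<in>{1..d}-{i}. \<bar>x j - y j\<bar>) = 0" by simp
  then have z: "\<forall>j\<in>{1..d}-{i}. \<bar>x j - y j\<bar> = 0"
    by (subst (asm) sum_nonneg_eq_0_iff) auto
  have "y = x(i := x i + (y i - x i))"
  proof
    fix j show "y j = (x(i := x i + (y i - x i))) j"
    proof (cases "j = i")
      case False
      show ?thesis
      proof (cases "j \<in> {1..d}")
        case True with z False show ?thesis by auto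
      next
        case False2: False
        with x y show ?thesis using False by (auto simp: lattice_def)
      qed
    qed simp
  qed
  moreover have "y i - x i \<in> {-1,1}" using e1 by (auto simp: abs_if split: if_splits)
  ultimately show ?thesis using i(1) by blast
qed

lemma nbr_subset: "x \<in> lattice d \<Longrightarrow> nbr d x \<subseteq> (\<lambda>(i,s). x(i := x i + s)) ` ({1..d} \<times> {-1,1})"
proof
  fix y assume x: "x \<in> lattice d" and y: "y \<in> nbr d x"
  then have "y \<in> lattice d" "adj d x y" by (auto simp: nbr_def)
  then obtain i s where hs: "i \<in> {1..d}" "s \<in> {-1,1}" "y = x(i := x i + s)"
    using adj_char[OF x] by blast
  show "y \<in> (\<lambda>(i,s). x(i := x i + s)) ` ({1..d} \<times> {-1,1})"
    by (rule image_eqI[of _ _ "(i,s)"]) (use hs in auto)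
qed

lemma finite_nbr: "x \<in> lattice d \<Longrightarrow> finite (nbr d x)"
  by (rule finite_subset[OF nbr_subset]) auto

lemma card_nbr: "x \<in> lattice d \<Longrightarrow> card (nbr d x) \<le> 2 * d"
proof -
  assume x: "x \<in> lattice d"
  have "card (nbr d x) \<le> card ((\<lambda>(i,s). x(i := x i + s)) ` ({1..d} \<times> {-1,1::int}))"
    by (rule card_mono[OF _ nbr_subset[OF x]]) auto
  also have "\<dots> \<le> card ({1..d} \<times> {-1,1::int})" by (rule card_image_le) auto
  also have "\<dots> = 2 * d" by (simp add: card_cartesian_product)
  finally show ?thesis .
qed

lemma nbr_adj: "x \<in> lattice d \<Longrightarrow> y \<in> nbr d x \<longleftrightarrow> y \<in> lattice d \<and> adj d x y"
  by (simp add: nbr_def)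

lemma finite_box: "finite (box d a l)"
proof -
  have "box d a l \<subseteq> (\<lambda>g i. if i \<in> {1..d} then g i else 0) ` PiE {1..d} (\<lambda>i. {a i..l i})"
  proof
    fix z assume z: "z \<in> box d a l"
    have "z = (\<lambda>i. if i \<in> {1..d} then restrict z {1..d} i else 0)"
      using z by (auto simp: box_def lattice_def)
    moreover have "restrict z {1..d} \<in> PiE {1..d} (\<lambda>i. {a i..l i})" using z by (auto simp: box_def)
    ultimately show "z \<in> (\<lambda>g i. if i \<in> {1..d} then g i else 0) ` PiE {1..d} (\<lambda>i. {a i..l i})" by blast
  qed
  then show ?thesis by (rule finite_subset) (auto intro: finite_PiE)
qed

lemma card_box: "card (box d a l) \<le> (\<Prod>i=1..d. nat (l i - a i + 1))"
proof -
  have "box d a l \<subseteq> (\<lambda>g i. if i \<in> {1..d} then g i else 0) ` PiE {1..d} (\<lambda>i. {a i..l i})"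
  proof
    fix z assume z: "z \<in> box d a l"
    have "z = (\<lambda>i. if i \<in> {1..d} then restrict z {1..d} i else 0)"
      using z by (auto simp: box_def lattice_def)
    moreover have "restrict z {1..d} \<in> PiE {1..d} (\<lambda>i. {a i..l i})" using z by (auto simp: box_def)
    ultimately show "z \<in> (\<lambda>g i. if i \<in> {1..d} then g i else 0) ` PiE {1..d} (\<lambda>i. {a i..l i})" by blast
  qed
  then have "card (box d a l) \<le> card ((\<lambda>g i. if i \<in> {1..d} then g i else 0) ` PiE {1..d} (\<lambda>i. {a i..l i}))"
    by (rule card_mono[rotated]) (auto intro: finite_PiE)
  also have "\<dots> \<le> card (PiE {1..d} (\<lambda>i. {a i..l i}))" by (rule card_image_le) (auto intro: finite_PiE)
  also have "\<dots> = (\<Prod>i=1..d. nat (l i - a i + 1))" by (simp add: card_PiE)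
  finally show ?thesis .
qed

lemma box_sub_lattice: "box d a l \<subseteq> lattice d" by (auto simp: box_def)

lemma strip_eq_box: "d \<ge> 1 \<Longrightarrow> box_strip d a l s t = box d (a(1:=s)) (l(1:=t))"
proof -
  assume d: "d \<ge> 1"
  have e: "{1..d} = insert (1::nat) {2..d}" using d by auto
  show ?thesis unfolding box_strip_def box_def e by auto
qed

lemma slice_eq_strip: "box_slice d a l s = box_strip d a l s s"
  unfolding box_strip_def box_slice_def by auto

lemma finite_bdry: "finite \<Lambda> \<Longrightarrow> \<Lambda> \<subseteq> lattice d \<Longrightarrow> finite (bdry d \<Lambda>)"
proof -
  assume f: "finite \<Lambda>" and s: "\<Lambda> \<subseteq> lattice d"
  have "bdry d \<Lambda> \<subseteq> (\<Union>y\<in>\<Lambda>. nbr d y)" by (auto simp: bdry_def nbr_def adj_sym)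
  moreover have "finite (\<Union>y\<in>\<Lambda>. nbr d y)" using f s finite_nbr by blast
  ultimately show ?thesis by (rule finite_subset)
qed

definition hs :: "nat \<Rightarrow> (real \<Rightarrow> real) \<Rightarrow> site set \<Rightarrow> (site \<Rightarrow> real) \<Rightarrow> (site \<Rightarrow> real) \<Rightarrow> site \<Rightarrow> real" where
  "hs d V \<Lambda> \<psi> \<phi> x = (\<Sum>y\<in>nbr d x. if y \<in> \<Lambda> then V (\<phi> x - \<phi> y) / 2 else V (\<phi> x - \<psi> y))"

lemma ham_nbr:
  assumes f: "finite \<Lambda>" and s: "\<Lambda> \<subseteq> lattice d"
  shows "Ham d V \<Lambda> \<psi> \<xi> \<phi> = (\<Sum>x\<in>\<Lambda>. hs d V \<Lambda> \<psi> \<phi> x) - (\<Sum>x\<in>\<Lambda>. \<xi> x * \<phi> x)"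
proof -
  have fb: "finite (bdry d \<Lambda>)" using finite_bdry[OF f s] .
  have 1: "(\<Sum>y\<in>\<Lambda>. if adj d x y then V (\<phi> x - \<phi> y) else 0) = (\<Sum>y\<in>nbr d x \<inter> \<Lambda>. V (\<phi> x - \<phi> y))"
    if x: "x \<in> \<Lambda>" for x
  proof -
    have "{y\<in>\<Lambda>. adj d x y} = nbr d x \<inter> \<Lambda>" using s by (auto simp: nbr_def)
    then show ?thesis using sum.inter_filter[OF f, of "\<lambda>y. V (\<phi> x - \<phi> y)" "adj d x"] by simp
  qed
  have 2: "(\<Sum>y\<in>bdry d \<Lambda>. if adj d x y then V (\<phi> x - \<psi> y) else 0) = (\<Sum>y\<in>nbr d x - \<Lambda>. V (\<phi> x - \<psi> y))"
    if x: "x \<in> \<Lambda>" for x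
  proof -
    have "{y\<in>bdry d \<Lambda>. adj d x y} = nbr d x - \<Lambda>" using s x by (auto simp: nbr_def bdry_def adj_sym)
    then show ?thesis using sum.inter_filter[OF fb, of "\<lambda>y. V (\<phi> x - \<psi> y)" "adj d x"] by simp
  qed
  have 3: "hs d V \<Lambda> \<psi> \<phi> x = (\<Sum>y\<in>nbr d x \<inter> \<Lambda>. V (\<phi> x - \<phi> y)) / 2 + (\<Sum>y\<in>nbr d x - \<Lambda>. V (\<phi> x - \<psi> y))"
    if x: "x \<in> \<Lambda>" for x
  proof -
    have fn: "finite (nbr d x)" using finite_nbr x s by blast
    have "hs d V \<Lambda> \<psi> \<phi> x = (\<Sum>y\<in>nbr d x \<inter> {y. y \<in> \<Lambda>}. V (\<phi> x - \<phi> y) / 2) + (\<Sum>y\<in>nbr d x \<inter> - {y. y \<in> \<Lambda>}. V (\<phi> x - \<psi> y))"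
      unfolding hs_def by (rule sum.If_cases[OF fn])
    also have "nbr d x \<inter> {y. y \<in> \<Lambda>} = nbr d x \<inter> \<Lambda>" by auto
    also have "nbr d x \<inter> - {y. y \<in> \<Lambda>} = nbr d x - \<Lambda>" by auto
    finally show ?thesis by (simp add: sum_divide_distrib)
  qed
  have "Ham d V \<Lambda> \<psi> \<xi> \<phi> = (\<Sum>x\<in>\<Lambda>. (\<Sum>y\<in>nbr d x \<inter> \<Lambda>. V (\<phi> x - \<phi> y)) / 2) + (\<Sum>x\<in>\<Lambda>. \<Sum>y\<in>nbr d x - \<Lambda>. V (\<phi> x - \<psi> y)) - (\<Sum>x\<in>\<Lambda>. \<xi> x * \<phi> x)"
    unfolding Ham_def using 1 2 by (simp add: sum_divide_distrib[symmetric])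
  also have "\<dots> = (\<Sum>x\<in>\<Lambda>. hs d V \<Lambda> \<psi> \<phi> x) - (\<Sum>x\<in>\<Lambda>. \<xi> x * \<phi> x)"
    using 3 by (simp add: sum.distrib[symmetric])
  finally show ?thesis .
qed

lemma psi_upd: "i \<in> {1..d} \<Longrightarrow> psi d u x - psi d u (x(i := x i + s)) = - real_of_int s * u i"
proof -
  assume i: "i \<in> {1..d}"
  have r: "(\<Sum>j=1..d. f j) = f i + (\<Sum>j\<in>{1..d}-{i}. f j)" for f :: "nat \<Rightarrow> real"
    by (rule sum.remove) (use i in auto)
  have c: "(\<Sum>j\<in>{1..d}-{i}. real_of_int ((x(i := x i + s)) j) * u j) = (\<Sum>j\<in>{1..d}-{i}. real_of_int (x j) * u j)"
    by (rule sum.cong) auto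
  show ?thesis unfolding psi_def r[of "\<lambda>j. real_of_int ((x(i := x i + s)) j) * u j"] r[of "\<lambda>j. real_of_int (x j) * u j"] c
    by (simp add: algebra_simps)
qed

lemma V_psi_bound:
  fixes V :: "real \<Rightarrow> real"
  assumes ev: "\<And>s. V (- s) = V s" and x: "x \<in> lattice d" and y: "y \<in> nbr d x"
  shows "\<bar>V (psi d u x - psi d u y)\<bar> \<le> (\<Sum>i=1..d. \<bar>V (u i)\<bar>)"
proof -
  have "y \<in> (\<lambda>(i,s). x(i := x i + s)) ` ({1..d} \<times> {-1,1})" using nbr_subset[OF x] y by (rule subsetD)
  then obtain p where p: "p \<in> {1..d} \<times> {-1,1}" "y = (\<lambda>(i,s). x(i := x i + s)) p" by (rule imageE)
  obtain i s where "p = (i, s)" by (cases p)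
  with p have hs: "i \<in> {1..d}" "s \<in> {-1,1}" "y = x(i := x i + s)" by auto
  have e: "psi d u x - psi d u y = - real_of_int s * u i"
    using psi_upd[OF hs(1), of u x s] hs(3) by simp
  have "V (- real_of_int s * u i) = V (u i)"
  proof (cases "s = 1")
    case True then show ?thesis using ev[of "u i"] by simp
  next
    case False then have "s = -1" using hs(2) by simp
    then show ?thesis by simp
  qed
  then have "V (psi d u x - psi d u y) = V (u i)" using e by simp
  moreover have "\<bar>V (u i)\<bar> \<le> (\<Sum>i=1..d. \<bar>V (u i)\<bar>)" by (rule member_le_sum[of i "{1..d}" "\<lambda>i. \<bar>V (u i)\<bar>"]) (use hs in auto)
  ultimately show ?thesis by simp
qed

lemma ham_cong:
  assumes h: "\<And>x. x \<in> \<Lambda> \<Longrightarrow> \<phi> x = \<phi>' x"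
  shows "Ham d V \<Lambda> \<psi> \<xi> \<phi> = Ham d V \<Lambda> \<psi> \<xi> \<phi>'"
proof -
  have A: "(\<Sum>x\<in>\<Lambda>. \<Sum>y\<in>\<Lambda>. if adj d x y then V (\<phi> x - \<phi> y) else 0) = (\<Sum>x\<in>\<Lambda>. \<Sum>y\<in>\<Lambda>. if adj d x y then V (\<phi>' x - \<phi>' y) else 0)"
    by (intro sum.cong refl) (simp add: h)
  have B: "(\<Sum>x\<in>\<Lambda>. \<Sum>y\<in>bdry d \<Lambda>. if adj d x y then V (\<phi> x - \<psi> y) else 0) = (\<Sum>x\<in>\<Lambda>. \<Sum>y\<in>bdry d \<Lambda>. if adj d x y then V (\<phi>' x - \<psi> y) else 0)"
    by (intro sum.cong refl) (simp add: h)
  have C: "(\<Sum>x\<in>\<Lambda>. \<xi> x * \<phi> x) = (\<Sum>x\<in>\<Lambda>. \<xi> x * \<phi>' x)"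
    by (intro sum.cong refl) (simp add: h)
  show ?thesis unfolding Ham_def A B C ..
qed

lemma ham_meas:
  assumes f: "finite \<Lambda>" and s: "\<Lambda> \<subseteq> I" and Vc: "continuous_on UNIV V"
  shows "(\<lambda>\<phi>. Ham d V \<Lambda> \<psi> \<xi> \<phi>) \<in> borel_measurable (PiM I (\<lambda>_. lborel))"
proof -
  let ?M = "PiM I (\<lambda>_. lborel) :: (site \<Rightarrow> real) measure"
  have Vm: "V \<in> borel_measurable borel" using Vc by (rule borel_measurable_continuous_onI)
  have cmp: "x \<in> \<Lambda> \<Longrightarrow> (\<lambda>\<phi>. \<phi> x) \<in> borel_measurable ?M" for x
    using s by (auto intro!: measurable_component_singleton)
  have mif: "\<And>f b. f \<in> borel_measurable ?M \<Longrightarrow> (\<lambda>\<phi>. if b then f \<phi> else (0::real)) \<in> borel_measurable ?M"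
    by (case_tac b) auto
  have VV: "\<And>f. f \<in> borel_measurable ?M \<Longrightarrow> (\<lambda>\<phi>. V (f \<phi>)) \<in> borel_measurable ?M"
    by (rule measurable_compose[OF _ Vm])
  have t1: "(\<lambda>\<phi>. \<Sum>x\<in>\<Lambda>. \<Sum>y\<in>\<Lambda>. if adj d x y then V (\<phi> x - \<phi> y) else 0) \<in> borel_measurable ?M"
    apply (rule borel_measurable_sum)+
    apply (rule mif, rule VV, rule borel_measurable_diff)
     apply (erule cmp)+
    done
  have t2: "(\<lambda>\<phi>. \<Sum>x\<in>\<Lambda>. \<Sum>y\<in>bdry d \<Lambda>. if adj d x y then V (\<phi> x - \<psi> y) else 0) \<in> borel_measurable ?M"
    apply (rule borel_measurable_sum)+
    apply (rule mif, rule VV, rule borel_measurable_diff)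
     apply (erule cmp)
    apply (rule borel_measurable_const)
    done
  have t3: "(\<lambda>\<phi>. \<Sum>x\<in>\<Lambda>. \<xi> x * \<phi> x) \<in> borel_measurable ?M"
    apply (rule borel_measurable_sum)
    apply (rule borel_measurable_times)
     apply (rule borel_measurable_const)
    apply (erule cmp)
    done
  show ?thesis unfolding Ham_def
    by (intro borel_measurable_add borel_measurable_diff borel_measurable_times borel_measurable_const t1 t2 t3)
qed

lemma nbr_sum_conv:
  assumes x: "x \<in> lattice d" and T: "T \<subseteq> lattice d" "finite T"
  shows "(\<Sum>y\<in>nbr d x. if y \<in> T then f y else 0) = (\<Sum>y\<in>T. if adj d x y then f y else 0)"
proof -
  have "(\<Sum>y\<in>nbr d x. if y \<in> T then f y else 0) = sum f (nbr d x \<inter> T)"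
    by (rule sum.inter_restrict[symmetric]) (rule finite_nbr[OF x])
  also have "nbr d x \<inter> T = T \<inter> {y. adj d x y}" using T by (auto simp: nbr_def)
  also have "sum f (T \<inter> {y. adj d x y}) = (\<Sum>y\<in>T. if adj d x y then f y else 0)"
    by (simp add: sum.inter_restrict[OF T(2)])
  finally show ?thesis .
qed

lemma swap_nbr:
  assumes P: "P \<subseteq> lattice d" "finite P" and Q: "Q \<subseteq> lattice d" "finite Q"
  shows "(\<Sum>x\<in>P. \<Sum>y\<in>nbr d x. if y \<in> Q then f x y else 0) = (\<Sum>y\<in>Q. \<Sum>x\<in>nbr d y. if x \<in> P then f x y else 0)"
proof -
  have "(\<Sum>x\<in>P. \<Sum>y\<in>nbr d x. if y \<in> Q then f x y else 0) = (\<Sum>x\<in>P. \<Sum>y\<in>Q. if adj d x y then f x y else 0)"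
    using P Q by (intro sum.cong refl nbr_sum_conv) auto
  also have "\<dots> = (\<Sum>y\<in>Q. \<Sum>x\<in>P. if adj d x y then f x y else 0)" by (rule sum.swap)
  also have "\<dots> = (\<Sum>y\<in>Q. \<Sum>x\<in>P. if adj d y x then f x y else 0)" by (simp add: adj_sym)
  also have "\<dots> = (\<Sum>y\<in>Q. \<Sum>x\<in>nbr d y. if x \<in> P then f x y else 0)"
    using P Q by (intro sum.cong refl nbr_sum_conv[symmetric]) auto
  finally show ?thesis .
qed

lemma main_alg:
  fixes V :: "real \<Rightarrow> real" and \<psi> \<phi> \<xi> :: "site \<Rightarrow> real"
  assumes fin: "finite L1" "finite S" "finite L2"
    and sub: "L1 \<subseteq> lattice d" "S \<subseteq> lattice d" "L2 \<subseteq> lattice d"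
    and disj: "L1 \<inter> S = {}" "L1 \<inter> L2 = {}" "S \<inter> L2 = {}"
    and nadj: "\<And>x y. x \<in> L1 \<Longrightarrow> y \<in> L2 \<Longrightarrow> \<not> adj d x y"
    and ev: "\<And>s. V (- s) = V s"
    and Vs: "\<And>c s. V (c + s) + V (c - s) \<le> 2 * V c + 2 * C2 * s\<^sup>2" and C2: "C2 \<ge> 0"
    and close: "\<And>x. x \<in> S \<Longrightarrow> \<bar>\<phi> x - \<psi> x\<bar> \<le> 1"
  defines "\<phi>' \<equiv> (\<lambda>x. if x \<in> S then 2 * \<psi> x - \<phi> x else \<phi> x)"
  shows "Ham d V (L1 \<union> S \<union> L2) \<psi> \<xi> \<phi> + Ham d V (L1 \<union> S \<union> L2) \<psi> \<xi> \<phi>'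
         \<le> 2 * Ham d V L1 \<psi> \<xi> \<phi> + 2 * Ham d V L2 \<psi> \<xi> \<phi> - 2 * (\<Sum>x\<in>S. \<xi> x * \<psi> x)
           + (\<Sum>x\<in>S. \<Sum>y\<in>nbr d x. 2 * \<bar>V (\<psi> x - \<psi> y)\<bar> + 4 * C2)"
proof -
  define L where "L = L1 \<union> S \<union> L2"
  define P where "P = L1 \<union> L2"
  have finL: "finite L" and subL: "L \<subseteq> lattice d" using fin sub by (auto simp: L_def)
  have finP: "finite P" and subP: "P \<subseteq> lattice d" using fin sub by (auto simp: P_def)
  define c where "c K f x y = (if y \<in> K then V (f x - f y) / 2 else V (f x - \<psi> y))" for K f x y
  define \<Delta> where "\<Delta> x y = c L \<phi> x y + c L \<phi>' x y - (if x \<in> L1 then 2 * c L1 \<phi> x y else 0)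
      - (if x \<in> L2 then 2 * c L2 \<phi> x y else 0)" for x y
  define F where "F x y = V (\<phi> x - \<psi> y) - C2" for x y
  define \<gamma> where "\<gamma> x y = (if x \<in> S \<and> y \<in> P then F y x else 0) - (if x \<in> P \<and> y \<in> S then F x y else 0)" for x y
  define \<beta> where "\<beta> x y = (if x \<in> S then 2 * \<bar>V (\<psi> x - \<psi> y)\<bar> + 4 * C2 else 0)" for x y
  have hsc: "hs d V K \<psi> f x = (\<Sum>y\<in>nbr d x. c K f x y)" for K f x
    by (simp add: hs_def c_def)
  have a: "(\<Sum>x\<in>L. hs d V L \<psi> \<phi> x) + (\<Sum>x\<in>L. hs d V L \<psi> \<phi>' x) - 2 * (\<Sum>x\<in>L1. hs d V L1 \<psi> \<phi> x)
      - 2 * (\<Sum>x\<in>L2. hs d V L2 \<psi> \<phi> x) = (\<Sum>x\<in>L. \<Sum>y\<in>nbr d x. \<Delta> x y)"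
  proof -
    have e1: "(\<Sum>x\<in>L1. hs d V L1 \<psi> \<phi> x) = (\<Sum>x\<in>L. if x \<in> L1 then hs d V L1 \<psi> \<phi> x else 0)"
    proof -
      have "L \<inter> L1 = L1" by (auto simp: L_def)
      then show ?thesis using sum.inter_restrict[OF finL, of "hs d V L1 \<psi> \<phi>" L1] by simp
    qed
    have e2: "(\<Sum>x\<in>L2. hs d V L2 \<psi> \<phi> x) = (\<Sum>x\<in>L. if x \<in> L2 then hs d V L2 \<psi> \<phi> x else 0)"
    proof -
      have "L \<inter> L2 = L2" by (auto simp: L_def)
      then show ?thesis using sum.inter_restrict[OF finL, of "hs d V L2 \<psi> \<phi>" L2] by simp
    qed
    have e3: "(\<Sum>y\<in>nbr d x. \<Delta> x y) = hs d V L \<psi> \<phi> x + hs d V L \<psi> \<phi>' x - (if x \<in> L1 then 2 * hs d V L1 \<psi> \<phi> x else 0)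
      - (if x \<in> L2 then 2 * hs d V L2 \<psi> \<phi> x else 0)" for x
      unfolding \<Delta>_def hsc by (simp add: sum.distrib sum_subtractf sum_distrib_left)
    have e1': "2 * (\<Sum>x\<in>L1. hs d V L1 \<psi> \<phi> x) = (\<Sum>x\<in>L. if x \<in> L1 then 2 * hs d V L1 \<psi> \<phi> x else 0)"
      unfolding e1 sum_distrib_left by (rule sum.cong) auto
    have e2': "2 * (\<Sum>x\<in>L2. hs d V L2 \<psi> \<phi> x) = (\<Sum>x\<in>L. if x \<in> L2 then 2 * hs d V L2 \<psi> \<phi> x else 0)"
      unfolding e2 sum_distrib_left by (rule sum.cong) auto
    show ?thesis unfolding e3 sum_subtractf sum.distrib using e1' e2' by linarith
  qed
  have b: "\<Delta> x y \<le> \<beta> x y + \<gamma> x y" if x: "x \<in> L" and y: "y \<in> nbr d x" for x y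
  proof -
    have ylat: "y \<in> lattice d" and adjxy: "adj d x y" using y by (auto simp: nbr_def)
    have notboth: "\<not> (x \<in> L1 \<and> y \<in> L2)" "\<not> (x \<in> L2 \<and> y \<in> L1)"
      using nadj adjxy adj_sym by blast+
    have sq1: "t\<^sup>2 \<le> 1" if "\<bar>t\<bar> \<le> 1" for t :: real
    proof -
      have "\<bar>t\<bar>\<^sup>2 \<le> 1\<^sup>2" using that by (intro power_mono) auto
      then show ?thesis by simp
    qed
    have C2m: "C2 * t \<le> C2 * 1" if "t \<le> 1" for t :: real using that C2 by (rule mult_left_mono)
    have C2m4: "C2 * t \<le> C2 * 4" if "t \<le> 4" for t :: real using that C2 by (rule mult_left_mono)
    consider "x \<in> S" | "x \<in> L1" | "x \<in> L2" using x by (auto simp: L_def)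
    then show ?thesis
    proof cases
      case xS: 1
      then have xn: "x \<notin> L1" "x \<notin> L2" "x \<notin> P" using disj by (auto simp: P_def)
      have tx: "\<bar>\<phi> x - \<psi> x\<bar> \<le> 1" using close xS by blast
      have tx2: "C2 * (\<phi> x - \<psi> x)\<^sup>2 \<le> C2 * 1" by (rule C2m[OF sq1[OF tx]])
      have bet: "\<beta> x y = 2 * \<bar>V (\<psi> x - \<psi> y)\<bar> + 4 * C2" using xS by (simp add: \<beta>_def)
      have absV: "V (\<psi> x - \<psi> y) \<le> \<bar>V (\<psi> x - \<psi> y)\<bar>" by simp
      consider "y \<in> P" | "y \<in> S" | "y \<notin> L" by (auto simp: L_def P_def)
      then show ?thesis
      proof cases
        case 1
        then have yL: "y \<in> L" "y \<notin> S" using disj by (auto simp: L_def P_def)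
        have D: "\<Delta> x y = (V (\<phi> x - \<phi> y) + V (2 * \<psi> x - \<phi> x - \<phi> y)) / 2"
          using xn yL xS by (simp add: \<Delta>_def c_def \<phi>'_def)
        have G: "\<gamma> x y = V (\<phi> y - \<psi> x) - C2"
          using xn xS 1 by (simp add: \<gamma>_def F_def)
        have I: "V (\<phi> x - \<phi> y) + V (2 * \<psi> x - \<phi> x - \<phi> y) \<le> 2 * V (\<psi> x - \<phi> y) + 2 * C2 * (\<phi> x - \<psi> x)\<^sup>2"
          using Vs[of "\<psi> x - \<phi> y" "\<phi> x - \<psi> x"] by (simp add: algebra_simps)
        have E: "V (\<psi> x - \<phi> y) = V (\<phi> y - \<psi> x)" using ev[of "\<phi> y - \<psi> x"] by simp
        have Z: "0 \<le> \<bar>V (\<psi> x - \<psi> y)\<bar>" by simp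
        define t where "t = C2 * (\<phi> x - \<psi> x)\<^sup>2"
        have I': "V (\<phi> x - \<phi> y) + V (2 * \<psi> x - \<phi> x - \<phi> y) \<le> 2 * V (\<phi> y - \<psi> x) + 2 * t"
          using I E by (simp add: t_def)
        have "\<Delta> x y \<le> V (\<phi> y - \<psi> x) + t" using D I' by simp
        then show ?thesis using G bet tx2 Z C2 unfolding t_def by linarith
      next
        case 2
        have yn: "y \<notin> L1" "y \<notin> L2" "y \<in> L" using disj 2 by (auto simp: L_def)
        have ty: "\<bar>\<phi> y - \<psi> y\<bar> \<le> 1" using close 2 by blast
        have D: "\<Delta> x y = (V (\<phi> x - \<phi> y) + V ((2 * \<psi> x - \<phi> x) - (2 * \<psi> y - \<phi> y))) / 2"
          using xn yn xS 2 by (simp add: \<Delta>_def c_def \<phi>'_def)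
        have G: "\<gamma> x y = 0" using xn 2 disj by (auto simp: \<gamma>_def P_def)
        have I: "V (\<phi> x - \<phi> y) + V ((2 * \<psi> x - \<phi> x) - (2 * \<psi> y - \<phi> y)) \<le> 2 * V (\<psi> x - \<psi> y) + 2 * C2 * ((\<phi> x - \<psi> x) - (\<phi> y - \<psi> y))\<^sup>2"
          using Vs[of "\<psi> x - \<psi> y" "(\<phi> x - \<psi> x) - (\<phi> y - \<psi> y)"] by (simp add: algebra_simps)
        have q: "((\<phi> x - \<psi> x) - (\<phi> y - \<psi> y))\<^sup>2 \<le> 4"
        proof -
          have "\<bar>(\<phi> x - \<psi> x) - (\<phi> y - \<psi> y)\<bar> \<le> 2" using tx ty by linarith
          then have "\<bar>(\<phi> x - \<psi> x) - (\<phi> y - \<psi> y)\<bar>\<^sup>2 \<le> 2\<^sup>2" by (intro power_mono) auto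
          then show ?thesis by simp
        qed
        have q2: "C2 * ((\<phi> x - \<psi> x) - (\<phi> y - \<psi> y))\<^sup>2 \<le> C2 * 4" by (rule C2m4[OF q])
        define t where "t = C2 * ((\<phi> x - \<psi> x) - (\<phi> y - \<psi> y))\<^sup>2"
        have I': "V (\<phi> x - \<phi> y) + V ((2 * \<psi> x - \<phi> x) - (2 * \<psi> y - \<phi> y)) \<le> 2 * V (\<psi> x - \<psi> y) + 2 * t"
          using I by (simp add: t_def)
        have "\<Delta> x y \<le> V (\<psi> x - \<psi> y) + t" using D I' by simp
        moreover have "0 \<le> \<bar>V (\<psi> x - \<psi> y)\<bar>" by simp
        ultimately show ?thesis using G q2 bet absV unfolding t_def by linarith
      next
        case 3
        then have yn: "y \<notin> S" "y \<notin> P" "y \<notin> L" by (auto simp: L_def P_def)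
        have D: "\<Delta> x y = V (\<phi> x - \<psi> y) + V (2 * \<psi> x - \<phi> x - \<psi> y)"
          using xn yn xS by (simp add: \<Delta>_def c_def \<phi>'_def)
        have G: "\<gamma> x y = 0" using xn yn by (auto simp: \<gamma>_def)
        have I: "V (\<phi> x - \<psi> y) + V (2 * \<psi> x - \<phi> x - \<psi> y) \<le> 2 * V (\<psi> x - \<psi> y) + 2 * C2 * (\<phi> x - \<psi> x)\<^sup>2"
          using Vs[of "\<psi> x - \<psi> y" "\<phi> x - \<psi> x"] by (simp add: algebra_simps)
        define t where "t = C2 * (\<phi> x - \<psi> x)\<^sup>2"
        have I': "V (\<phi> x - \<psi> y) + V (2 * \<psi> x - \<phi> x - \<psi> y) \<le> 2 * V (\<psi> x - \<psi> y) + 2 * t"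
          using I by (simp add: t_def)
        show ?thesis using D G I' tx2 bet absV C2 unfolding t_def by linarith
      qed
    next
      case 2
      then have xn: "x \<notin> S" "x \<notin> L2" "x \<in> P" using disj by (auto simp: P_def)
      have bet: "\<beta> x y = 0" using xn by (simp add: \<beta>_def)
      consider "y \<in> S" | "y \<in> L1" | "y \<notin> L" using notboth 2 by (auto simp: L_def)
      then show ?thesis
      proof cases
        case 1
        have yn: "y \<notin> L1" "y \<in> L" "y \<notin> P" using disj 1 by (auto simp: L_def P_def)
        have ty: "\<bar>\<phi> y - \<psi> y\<bar> \<le> 1" using close 1 by blast
        have D: "\<Delta> x y = (V (\<phi> x - \<phi> y) + V (\<phi> x - (2 * \<psi> y - \<phi> y))) / 2 - 2 * V (\<phi> x - \<psi> y)"
          using xn yn 1 2 by (simp add: \<Delta>_def c_def \<phi>'_def)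
        have G: "\<gamma> x y = - (V (\<phi> x - \<psi> y) - C2)" using xn yn 1 by (simp add: \<gamma>_def F_def)
        have I: "V (\<phi> x - \<phi> y) + V (\<phi> x - (2 * \<psi> y - \<phi> y)) \<le> 2 * V (\<phi> x - \<psi> y) + 2 * C2 * (\<phi> y - \<psi> y)\<^sup>2"
          using Vs[of "\<phi> x - \<psi> y" "\<psi> y - \<phi> y"] by (simp add: algebra_simps power2_commute)
        have ty2: "C2 * (\<phi> y - \<psi> y)\<^sup>2 \<le> C2 * 1" by (rule C2m[OF sq1[OF ty]])
        define t where "t = C2 * (\<phi> y - \<psi> y)\<^sup>2"
        have I': "V (\<phi> x - \<phi> y) + V (\<phi> x - (2 * \<psi> y - \<phi> y)) \<le> 2 * V (\<phi> x - \<psi> y) + 2 * t"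
          using I by (simp add: t_def)
        have "\<Delta> x y \<le> t - V (\<phi> x - \<psi> y)" using D I' by (simp add: field_simps)
        then show ?thesis using G ty2 bet unfolding t_def by linarith
      next
        case 3
        have yn: "y \<notin> L1" "y \<notin> S" "y \<notin> L" using 3 by (auto simp: L_def)
        have "\<Delta> x y = 0" using xn yn 2 by (simp add: \<Delta>_def c_def \<phi>'_def)
        moreover have "\<gamma> x y = 0" using xn yn by (auto simp: \<gamma>_def P_def L_def)
        ultimately show ?thesis using bet by simp
      next
        case 4: 2
        have yn: "y \<notin> S" "y \<in> L" using disj 4 by (auto simp: L_def)
        have "\<Delta> x y = 0" using xn yn 2 4 by (simp add: \<Delta>_def c_def \<phi>'_def)
        moreover have "\<gamma> x y = 0" using xn yn by (auto simp: \<gamma>_def P_def L_def)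
        ultimately show ?thesis using bet by simp
      qed
    next
      case 3
      then have xn: "x \<notin> S" "x \<notin> L1" "x \<in> P" using disj by (auto simp: P_def)
      have bet: "\<beta> x y = 0" using xn by (simp add: \<beta>_def)
      consider "y \<in> S" | "y \<in> L2" | "y \<notin> L" using notboth 3 by (auto simp: L_def)
      then show ?thesis
      proof cases
        case 1
        have yn: "y \<notin> L2" "y \<in> L" "y \<notin> P" using disj 1 by (auto simp: L_def P_def)
        have ty: "\<bar>\<phi> y - \<psi> y\<bar> \<le> 1" using close 1 by blast
        have D: "\<Delta> x y = (V (\<phi> x - \<phi> y) + V (\<phi> x - (2 * \<psi> y - \<phi> y))) / 2 - 2 * V (\<phi> x - \<psi> y)"
          using xn yn 1 3 by (simp add: \<Delta>_def c_def \<phi>'_def)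
        have G: "\<gamma> x y = - (V (\<phi> x - \<psi> y) - C2)" using xn yn 1 by (simp add: \<gamma>_def F_def)
        have I: "V (\<phi> x - \<phi> y) + V (\<phi> x - (2 * \<psi> y - \<phi> y)) \<le> 2 * V (\<phi> x - \<psi> y) + 2 * C2 * (\<phi> y - \<psi> y)\<^sup>2"
          using Vs[of "\<phi> x - \<psi> y" "\<psi> y - \<phi> y"] by (simp add: algebra_simps power2_commute)
        have ty2: "C2 * (\<phi> y - \<psi> y)\<^sup>2 \<le> C2 * 1" by (rule C2m[OF sq1[OF ty]])
        define t where "t = C2 * (\<phi> y - \<psi> y)\<^sup>2"
        have I': "V (\<phi> x - \<phi> y) + V (\<phi> x - (2 * \<psi> y - \<phi> y)) \<le> 2 * V (\<phi> x - \<psi> y) + 2 * t"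
          using I by (simp add: t_def)
        have "\<Delta> x y \<le> t - V (\<phi> x - \<psi> y)" using D I' by (simp add: field_simps)
        then show ?thesis using G ty2 bet unfolding t_def by linarith
      next
        case 4: 2
        have yn: "y \<notin> S" "y \<in> L" using disj 4 by (auto simp: L_def)
        have "\<Delta> x y = 0" using xn yn 3 4 by (simp add: \<Delta>_def c_def \<phi>'_def)
        moreover have "\<gamma> x y = 0" using xn yn by (auto simp: \<gamma>_def P_def L_def)
        ultimately show ?thesis using bet by simp
      next
        case 5: 3
        have yn: "y \<notin> L2" "y \<notin> S" "y \<notin> L" using 5 by (auto simp: L_def)
        have "\<Delta> x y = 0" using xn yn 3 by (simp add: \<Delta>_def c_def \<phi>'_def)
        moreover have "\<gamma> x y = 0" using xn yn by (auto simp: \<gamma>_def P_def L_def)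
        ultimately show ?thesis using bet by simp
      qed
    qed
  qed
  have restr: "(\<Sum>x\<in>L. \<Sum>y\<in>nbr d x. if x \<in> T \<and> Q x y then f x y else 0) = (\<Sum>x\<in>T. \<Sum>y\<in>nbr d x. if Q x y then f x y else 0)"
    if T: "T \<subseteq> L" for T Q and f :: "site \<Rightarrow> site \<Rightarrow> real"
  proof -
    have "(\<Sum>x\<in>L. \<Sum>y\<in>nbr d x. if x \<in> T \<and> Q x y then f x y else 0) = (\<Sum>x\<in>L. if x \<in> T then (\<Sum>y\<in>nbr d x. if Q x y then f x y else 0) else 0)"
      by (rule sum.cong) auto
    also have "\<dots> = (\<Sum>x\<in>L \<inter> T. \<Sum>y\<in>nbr d x. if Q x y then f x y else 0)"
      by (rule sum.inter_restrict[OF finL, symmetric])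
    also have "L \<inter> T = T" using T by auto
    finally show ?thesis .
  qed
  have SL: "S \<subseteq> L" and PL: "P \<subseteq> L" by (auto simp: L_def P_def)
  have c: "(\<Sum>x\<in>L. \<Sum>y\<in>nbr d x. \<gamma> x y) = 0"
  proof -
    have "(\<Sum>x\<in>L. \<Sum>y\<in>nbr d x. \<gamma> x y) = (\<Sum>x\<in>L. \<Sum>y\<in>nbr d x. if x \<in> S \<and> y \<in> P then F y x else 0)
       - (\<Sum>x\<in>L. \<Sum>y\<in>nbr d x. if x \<in> P \<and> y \<in> S then F x y else 0)"
      unfolding \<gamma>_def by (simp add: sum_subtractf)
    also have "(\<Sum>x\<in>L. \<Sum>y\<in>nbr d x. if x \<in> S \<and> y \<in> P then F y x else 0) = (\<Sum>x\<in>S. \<Sum>y\<in>nbr d x. if y \<in> P then F y x else 0)"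
      by (rule restr[OF SL])
    also have "(\<Sum>x\<in>L. \<Sum>y\<in>nbr d x. if x \<in> P \<and> y \<in> S then F x y else 0) = (\<Sum>x\<in>P. \<Sum>y\<in>nbr d x. if y \<in> S then F x y else 0)"
      by (rule restr[OF PL])
    also have "\<dots> = (\<Sum>y\<in>S. \<Sum>x\<in>nbr d y. if x \<in> P then F x y else 0)"
      by (rule swap_nbr) (use finP subP fin sub in auto)
    finally show ?thesis by simp
  qed
  have dd: "(\<Sum>x\<in>L. \<Sum>y\<in>nbr d x. \<beta> x y) = (\<Sum>x\<in>S. \<Sum>y\<in>nbr d x. 2 * \<bar>V (\<psi> x - \<psi> y)\<bar> + 4 * C2)"
    unfolding \<beta>_def using restr[OF SL, of "\<lambda>x y. True" "\<lambda>x y. 2 * \<bar>V (\<psi> x - \<psi> y)\<bar> + 4 * C2"] by simp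
  have hsbound: "(\<Sum>x\<in>L. \<Sum>y\<in>nbr d x. \<Delta> x y) \<le> (\<Sum>x\<in>S. \<Sum>y\<in>nbr d x. 2 * \<bar>V (\<psi> x - \<psi> y)\<bar> + 4 * C2)"
  proof -
    have "(\<Sum>x\<in>L. \<Sum>y\<in>nbr d x. \<Delta> x y) \<le> (\<Sum>x\<in>L. \<Sum>y\<in>nbr d x. \<beta> x y + \<gamma> x y)"
      by (intro sum_mono b) auto
    also have "\<dots> = (\<Sum>x\<in>L. \<Sum>y\<in>nbr d x. \<beta> x y) + (\<Sum>x\<in>L. \<Sum>y\<in>nbr d x. \<gamma> x y)"
      by (simp add: sum.distrib)
    finally show ?thesis using c dd by simp
  qed
  have split: "(\<Sum>x\<in>L. g x) = (\<Sum>x\<in>L1. g x) + (\<Sum>x\<in>S. g x) + (\<Sum>x\<in>L2. g x)" for g :: "site \<Rightarrow> real"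
    unfolding L_def using fin disj by (simp add: sum.union_disjoint Int_Un_distrib2)
  have xi: "(\<Sum>x\<in>L. \<xi> x * \<phi> x) + (\<Sum>x\<in>L. \<xi> x * \<phi>' x) = 2 * (\<Sum>x\<in>L1. \<xi> x * \<phi> x) + 2 * (\<Sum>x\<in>L2. \<xi> x * \<phi> x) + 2 * (\<Sum>x\<in>S. \<xi> x * \<psi> x)"
  proof -
    have 1: "(\<Sum>x\<in>L1. \<xi> x * \<phi>' x) = (\<Sum>x\<in>L1. \<xi> x * \<phi> x)"
      using disj by (intro sum.cong) (auto simp: \<phi>'_def)
    have 2: "(\<Sum>x\<in>L2. \<xi> x * \<phi>' x) = (\<Sum>x\<in>L2. \<xi> x * \<phi> x)"
      using disj by (intro sum.cong) (auto simp: \<phi>'_def)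
    have 3: "(\<Sum>x\<in>S. \<xi> x * \<phi> x) + (\<Sum>x\<in>S. \<xi> x * \<phi>' x) = 2 * (\<Sum>x\<in>S. \<xi> x * \<psi> x)"
      by (simp add: sum.distrib[symmetric] sum_distrib_left \<phi>'_def algebra_simps)
    show ?thesis using split[of "\<lambda>x. \<xi> x * \<phi> x"] split[of "\<lambda>x. \<xi> x * \<phi>' x"] 1 2 3 by linarith
  qed
  have H: "Ham d V K \<psi> \<xi> f = (\<Sum>x\<in>K. hs d V K \<psi> f x) - (\<Sum>x\<in>K. \<xi> x * f x)"
    if "finite K" "K \<subseteq> lattice d" for K f by (rule ham_nbr[OF that])
  show ?thesis
    unfolding L_def[symmetric]
    using H[OF finL subL, of \<phi>] H[OF finL subL, of \<phi>'] H[OF fin(1) sub(1), of \<phi>] H[OF fin(3) sub(3), of \<phi>]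
      a hsbound xi by linarith
qed


lemma deriv_lip:
  fixes V :: "real \<Rightarrow> real"
  assumes V'_diff: "\<And>s. deriv V differentiable (at s)"
    and V_upper: "\<And>s. deriv (deriv V) s \<le> C2"
    and pq: "q \<le> p"
  shows "deriv V p - deriv V q \<le> C2 * (p - q)"
proof (cases "q = p")
  case False
  with pq have lt: "q < p" by simp
  have "\<And>x. DERIV (deriv V) x :> deriv (deriv V) x"
    using V'_diff DERIV_deriv_iff_real_differentiable by blast
  then obtain z where "deriv V p - deriv V q = (p - q) * deriv (deriv V) z"
    using MVT2[OF lt] by blast
  moreover have "(p - q) * deriv (deriv V) z \<le> (p - q) * C2"
    using V_upper lt by (intro mult_left_mono) auto
  ultimately show ?thesis by (simp add: mult.commute)
qed simp

lemma V_sym_pos: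
  fixes V :: "real \<Rightarrow> real"
  assumes V_diff: "\<And>s. V differentiable (at s)"
    and V'_diff: "\<And>s. deriv V differentiable (at s)"
    and V_upper: "\<And>s. deriv (deriv V) s \<le> C2"
    and s: "s > 0" and C2: "C2 \<ge> 0"
  shows "V (c + s) + V (c - s) \<le> 2 * V c + 2 * C2 * s\<^sup>2"
proof -
  have D: "\<And>x. DERIV V x :> deriv V x"
    using V_diff DERIV_deriv_iff_real_differentiable by blast
  obtain z1 where z1: "c < z1" "z1 < c + s" "V (c + s) - V c = (c + s - c) * deriv V z1"
    using MVT2[of c "c+s" V "deriv V"] s D by auto
  obtain z2 where z2: "c - s < z2" "z2 < c" "V c - V (c - s) = (c - (c - s)) * deriv V z2"
    using MVT2[of "c-s" c V "deriv V"] s D by auto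
  have "deriv V z1 - deriv V z2 \<le> C2 * (z1 - z2)"
    by (rule deriv_lip[OF V'_diff V_upper]) (use z1 z2 in auto)
  also have "\<dots> \<le> C2 * (2 * s)"
    using z1 z2 C2 by (intro mult_left_mono) auto
  finally have "s * (deriv V z1 - deriv V z2) \<le> s * (C2 * (2 * s))"
    using s by (intro mult_left_mono) auto
  then show ?thesis using z1(3) z2(3) by (simp add: power2_eq_square algebra_simps)
qed

lemma V_sym:
  fixes V :: "real \<Rightarrow> real"
  assumes V_diff: "\<And>s. V differentiable (at s)"
    and V'_diff: "\<And>s. deriv V differentiable (at s)"
    and V_upper: "\<And>s. deriv (deriv V) s \<le> C2" and C2: "C2 \<ge> 0"
  shows "V (c + s) + V (c - s) \<le> 2 * V c + 2 * C2 * s\<^sup>2"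
proof -
  consider "s > 0" | "s = 0" | "s < 0" by linarith
  then show ?thesis
  proof cases
    case 1 then show ?thesis using V_sym_pos[OF V_diff V'_diff V_upper _ C2] by blast
  next
    case 2 then show ?thesis by simp
  next
    case 3
    then have "V (c + (-s)) + V (c - (-s)) \<le> 2 * V c + 2 * C2 * (-s)\<^sup>2"
      using V_sym_pos[OF V_diff V'_diff V_upper _ C2, of "-s"] by simp
    then show ?thesis by simp
  qed
qed


abbreviation PL :: "site set \<Rightarrow> (site \<Rightarrow> real) measure" where
  "PL \<Lambda> \<equiv> PiM \<Lambda> (\<lambda>_. lborel)"

lemma lborel_refl_emeasure:
  assumes B: "B \<in> sets lborel"
  shows "emeasure lborel ((\<lambda>t::real. c - t) -` B) = emeasure lborel B"
proof -
  have "lborel = density (distr lborel borel (\<lambda>x::real. c + -1 * x)) (\<lambda>_. ennreal \<bar>-1\<bar>)"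
    by (rule lborel_real_affine) simp
  then have e: "lborel = distr lborel borel (\<lambda>x::real. c + -1 * x)"
    by (simp add: density_1 one_ennreal_def[symmetric])
  have m: "(\<lambda>x::real. c + -1 * x) \<in> measurable lborel borel" by measurable
  have "emeasure lborel B = emeasure (distr lborel borel (\<lambda>x::real. c + -1 * x)) B"
    using e by simp
  also have "\<dots> = emeasure lborel ((\<lambda>x::real. c + -1 * x) -` B \<inter> space lborel)"
    by (rule emeasure_distr[OF m]) (use B in simp)
  also have "(\<lambda>x::real. c + -1 * x) -` B \<inter> space lborel = (\<lambda>t::real. c - t) -` B" by auto
  finally show ?thesis by simp
qed

lemma reflect_distr:
  fixes \<Lambda> S :: "site set" and c :: "site \<Rightarrow> real"
  assumes fin: "finite \<Lambda>"
  defines "R \<equiv> (\<lambda>\<phi>::site\<Rightarrow>real. \<lambda>x\<in>\<Lambda>. if x \<in> S then c x - \<phi> x else \<phi> x)"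
  shows "distr (PL \<Lambda>) (PL \<Lambda>) R = PL \<Lambda>" and "R \<in> measurable (PL \<Lambda>) (PL \<Lambda>)"
proof -
  interpret product_sigma_finite "\<lambda>_::site. lborel::real measure" by standard
  have cm: "(\<lambda>\<phi>::site\<Rightarrow>real. if x \<in> S then c x - \<phi> x else \<phi> x) \<in> measurable (PL \<Lambda>) lborel" if x: "x \<in> \<Lambda>" for x
  proof (cases "x \<in> S")
    case True
    have "(\<lambda>\<phi>::site\<Rightarrow>real. c x - \<phi> x) \<in> borel_measurable (PL \<Lambda>)"
    proof -
      have "(\<lambda>\<phi>::site\<Rightarrow>real. \<phi> x) \<in> borel_measurable (PL \<Lambda>)"
        using measurable_component_singleton[OF x, of "\<lambda>_. lborel"] by simp
      then show ?thesis by (rule borel_measurable_diff[OF borel_measurable_const])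
    qed
    then show ?thesis using True by simp
  next
    case False
    then show ?thesis using measurable_component_singleton[OF x, of "\<lambda>_. lborel"] by simp
  qed
  show Rm: "R \<in> measurable (PL \<Lambda>) (PL \<Lambda>)"
    unfolding R_def by (rule measurable_restrict) (rule cm)
  show "distr (PL \<Lambda>) (PL \<Lambda>) R = PL \<Lambda>"
  proof (rule PiM_eqI)
    show "finite \<Lambda>" by (rule fin)
    show "sets (distr (PL \<Lambda>) (PL \<Lambda>) R) = sets (PL \<Lambda>)" by simp
    fix A :: "site \<Rightarrow> real set" assume A: "\<And>i. i \<in> \<Lambda> \<Longrightarrow> A i \<in> sets lborel"
    define A' where "A' i = (if i \<in> S then (\<lambda>t. c i - t) -` A i else A i)" for i
    have pre: "R -` PiE \<Lambda> A \<inter> space (PL \<Lambda>) = PiE \<Lambda> A'"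
      by (auto simp: R_def A'_def space_PiM PiE_iff split: if_splits)
    have A'm: "A' i \<in> sets lborel" if i: "i \<in> \<Lambda>" for i
    proof (cases "i \<in> S")
      case True
      have m: "(\<lambda>t::real. c i - t) \<in> measurable lborel lborel" by measurable
      have "(\<lambda>t::real. c i - t) -` A i \<inter> space lborel \<in> sets lborel"
        by (rule measurable_sets[OF m A[OF i]])
      then show ?thesis using True by (simp add: A'_def)
    next
      case False then show ?thesis using A[OF i] by (simp add: A'_def)
    qed
    have em: "emeasure lborel (A' i) = emeasure lborel (A i)" if i: "i \<in> \<Lambda>" for i
      using lborel_refl_emeasure[OF A[OF i], of "c i"] by (simp add: A'_def)
    have "emeasure (distr (PL \<Lambda>) (PL \<Lambda>) R) (PiE \<Lambda> A) = emeasure (PL \<Lambda>) (R -` PiE \<Lambda> A \<inter> space (PL \<Lambda>))"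
      by (rule emeasure_distr[OF Rm]) (use A fin in \<open>auto intro!: sets_PiM_I_finite\<close>)
    also have "\<dots> = (\<Prod>i\<in>\<Lambda>. emeasure lborel (A' i))"
      unfolding pre by (rule emeasure_PiM[OF fin A'm])
    also have "\<dots> = (\<Prod>i\<in>\<Lambda>. emeasure lborel (A i))"
      by (rule prod.cong) (auto simp: em)
    finally show "emeasure (distr (PL \<Lambda>) (PL \<Lambda>) R) (PiE \<Lambda> A) = (\<Prod>i\<in>\<Lambda>. emeasure lborel (A i))" .
  qed
qed

lemma reflect_nn:
  fixes \<Lambda> S :: "site set" and c :: "site \<Rightarrow> real"
  assumes fin: "finite \<Lambda>" and f: "f \<in> borel_measurable (PL \<Lambda>)"
  shows "(\<integral>\<^sup>+\<phi>. f (\<lambda>x\<in>\<Lambda>. if x \<in> S then c x - \<phi> x else \<phi> x) \<partial>PL \<Lambda>) = (\<integral>\<^sup>+\<phi>. f \<phi> \<partial>PL \<Lambda>)"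
proof -
  let ?R = "\<lambda>\<phi>::site\<Rightarrow>real. \<lambda>x\<in>\<Lambda>. if x \<in> S then c x - \<phi> x else \<phi> x"
  have "(\<integral>\<^sup>+\<phi>. f \<phi> \<partial>PL \<Lambda>) = (\<integral>\<^sup>+\<phi>. f \<phi> \<partial>distr (PL \<Lambda>) (PL \<Lambda>) ?R)"
    using reflect_distr(1)[OF fin, of S c] by simp
  also have "\<dots> = (\<integral>\<^sup>+\<phi>. f (?R \<phi>) \<partial>PL \<Lambda>)"
    by (rule nn_integral_distr[OF reflect_distr(2)[OF fin, of S c]]) (use f in simp)
  finally show ?thesis by simp
qed

lemma prod_split:
  assumes IJ: "I \<inter> J = {}" "finite I" "finite J"
    and f: "f \<in> borel_measurable (PL I)" and g: "g \<in> borel_measurable (PL J)"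
  shows "(\<integral>\<^sup>+\<phi>. f (restrict \<phi> I) * g (restrict \<phi> J) \<partial>PL (I \<union> J)) = (\<integral>\<^sup>+\<phi>. f \<phi> \<partial>PL I) * (\<integral>\<^sup>+\<phi>. g \<phi> \<partial>PL J)"
proof -
  interpret product_sigma_finite "\<lambda>_::site. lborel::real measure" by standard
  have m: "(\<lambda>\<phi>. f (restrict \<phi> I) * g (restrict \<phi> J)) \<in> borel_measurable (PL (I \<union> J))"
  proof -
    have r1: "(\<lambda>\<phi>. restrict \<phi> I) \<in> measurable (PL (I \<union> J)) (PL I)" by (rule measurable_restrict_subset) auto
    have r2: "(\<lambda>\<phi>. restrict \<phi> J) \<in> measurable (PL (I \<union> J)) (PL J)" by (rule measurable_restrict_subset) auto
    show ?thesis by (rule borel_measurable_times_ennreal[OF measurable_compose[OF r1 f] measurable_compose[OF r2 g]])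
  qed
  have "(\<integral>\<^sup>+\<phi>. f (restrict \<phi> I) * g (restrict \<phi> J) \<partial>PL (I \<union> J))
      = (\<integral>\<^sup>+x. (\<integral>\<^sup>+y. f (restrict (merge I J (x, y)) I) * g (restrict (merge I J (x, y)) J) \<partial>PL J) \<partial>PL I)"
    by (rule product_nn_integral_fold[OF IJ m])
  also have "\<dots> = (\<integral>\<^sup>+x. (\<integral>\<^sup>+y. f x * g y \<partial>PL J) \<partial>PL I)"
  proof (rule nn_integral_cong)
    fix x assume x: "x \<in> space (PL I)"
    show "(\<integral>\<^sup>+y. f (restrict (merge I J (x, y)) I) * g (restrict (merge I J (x, y)) J) \<partial>PL J) = (\<integral>\<^sup>+y. f x * g y \<partial>PL J)"
    proof (rule nn_integral_cong)
      fix y assume y: "y \<in> space (PL J)"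
      have "restrict x I = x" using x by (simp add: space_PiM PiE_def restrict_def extensional_def fun_eq_iff)
      moreover have "restrict y J = y" using y by (simp add: space_PiM PiE_def restrict_def extensional_def fun_eq_iff)
      ultimately show "f (restrict (merge I J (x, y)) I) * g (restrict (merge I J (x, y)) J) = f x * g y"
        using IJ(1) by simp
    qed
  qed
  also have "\<dots> = (\<integral>\<^sup>+x. f x * (\<integral>\<^sup>+y. g y \<partial>PL J) \<partial>PL I)"
    by (rule nn_integral_cong) (rule nn_integral_cmult[OF g])
  also have "\<dots> = (\<integral>\<^sup>+\<phi>. f \<phi> \<partial>PL I) * (\<integral>\<^sup>+\<phi>. g \<phi> \<partial>PL J)"
    by (rule nn_integral_multc[OF f])
  finally show ?thesis .
qed

lemma gauss_fin:
  assumes c: "(c::real) > 0"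
  shows "(\<integral>\<^sup>+t. ennreal (exp (- c * t\<^sup>2)) \<partial>lborel) < \<infinity>"
proof -
  define \<sigma> where "\<sigma> = sqrt (1 / (2 * c))"
  have sp: "\<sigma> > 0" using c by (simp add: \<sigma>_def)
  have s2: "\<sigma>\<^sup>2 = 1 / (2 * c)" using c by (simp add: \<sigma>_def)
  define k where "k = sqrt (2 * pi * \<sigma>\<^sup>2)"
  have kp: "k > 0" using sp by (simp add: k_def)
  have kv: "k = sqrt (pi / c)" unfolding k_def s2 by simp
  have eq: "exp (- (c * t\<^sup>2)) = k * normal_density 0 \<sigma> t" for t
    using kp c unfolding normal_density_def k_def[symmetric] s2 kv by (simp add: field_simps)
  have "(\<integral>\<^sup>+t. ennreal (exp (- c * t\<^sup>2)) \<partial>lborel) = (\<integral>\<^sup>+t. ennreal k * ennreal (normal_density 0 \<sigma> t) \<partial>lborel)"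
    by (rule nn_integral_cong) (simp only: mult_minus_left eq ennreal_mult[OF less_imp_le[OF kp] normal_density_nonneg])
  also have "\<dots> = ennreal k * (\<integral>\<^sup>+t. ennreal (normal_density 0 \<sigma> t) \<partial>lborel)"
    by (rule nn_integral_cmult) simp
  also have "(\<integral>\<^sup>+t. ennreal (normal_density 0 \<sigma> t) \<partial>lborel) = ennreal 1"
    using nn_integral_eq_integral[OF integrable_normal_density[OF sp]] integral_normal_density[OF sp]
    by simp
  finally show ?thesis by simp
qed

lemma PL_space_pos: "finite \<Lambda> \<Longrightarrow> emeasure (PL \<Lambda>) (space (PL \<Lambda>)) \<noteq> 0"
proof -
  assume fin: "finite \<Lambda>"
  interpret product_sigma_finite "\<lambda>_::site. lborel::real measure" by standard
  have "space (PL \<Lambda>) = PiE \<Lambda> (\<lambda>_. UNIV)" by (simp add: space_PiM)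
  then have "emeasure (PL \<Lambda>) (space (PL \<Lambda>)) = (\<Prod>i\<in>\<Lambda>. emeasure lborel (UNIV::real set))"
    using emeasure_PiM[OF fin, of "\<lambda>_. UNIV"] by simp
  then show ?thesis using fin by simp
qed

lemma nn_pos:
  assumes fin: "finite \<Lambda>" and f: "f \<in> borel_measurable (PL \<Lambda>)" and pos: "\<And>\<phi>. f \<phi> > 0"
  shows "(\<integral>\<^sup>+\<phi>. f \<phi> \<partial>PL \<Lambda>) > 0"
proof (rule ccontr)
  assume "\<not> ?thesis"
  then have "(\<integral>\<^sup>+\<phi>. f \<phi> \<partial>PL \<Lambda>) = 0" by simp
  then have "AE \<phi> in PL \<Lambda>. f \<phi> = 0" using nn_integral_0_iff_AE[OF f] by simp
  moreover have "AE \<phi> in PL \<Lambda>. f \<phi> = 0 \<longrightarrow> False"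
  proof (rule AE_I2)
    fix \<phi> show "f \<phi> = 0 \<longrightarrow> False" using pos[of \<phi>] by auto
  qed
  ultimately have "AE \<phi> in PL \<Lambda>. False" by (rule AE_mp)
  then have "ae_filter (PL \<Lambda>) = bot" using trivial_limit_def by blast
  then have "emeasure (PL \<Lambda>) (space (PL \<Lambda>)) = 0" using ae_filter_eq_bot_iff by blast
  with PL_space_pos[OF fin] show False by simp
qed


lemma pred_nbr:
  assumes d: "d \<ge> 1" and x: "x \<in> lattice d"
  shows "x(1 := x 1 - 1) \<in> nbr d x" and "adj d (x(1 := x 1 - 1)) x"
proof -
  have l: "x(1 := x 1 - 1) \<in> lattice d" using x d by (auto simp: lattice_def)
  have "(\<Sum>i=1..d. \<bar>x i - (x(1 := x 1 - 1)) i\<bar>) = (\<Sum>i=1..d. if i = 1 then 1 else 0)"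
    by (rule sum.cong) auto
  also have "\<dots> = 1" using d by simp
  finally have a: "adj d x (x(1 := x 1 - 1))" by (simp add: adj_def)
  show "x(1 := x 1 - 1) \<in> nbr d x" using l a by (simp add: nbr_def)
  show "adj d (x(1 := x 1 - 1)) x" using a adj_sym by blast
qed

lemma ham_lower:
  fixes V :: "real \<Rightarrow> real"
  assumes d: "d \<ge> 1" and fin: "finite \<Lambda>" and sub: "\<Lambda> \<subseteq> lattice d"
    and A: "A > 0" and Vl: "\<And>s. V s \<ge> A * s\<^sup>2 - B"
  shows "\<exists>\<epsilon>>0. \<exists>K. \<forall>\<phi>. Ham d V \<Lambda> \<psi> \<xi> \<phi> \<ge> \<epsilon> * (\<Sum>x\<in>\<Lambda>. (\<phi> x)\<^sup>2) - K"
proof -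
  define B' where "B' = max B 0"
  have B'0: "B' \<ge> 0" by (simp add: B'_def)
  have Vl': "V s \<ge> A * s\<^sup>2 - B'" for s using Vl[of s] by (simp add: B'_def)
  have Vb: "V s \<ge> - B'" for s using Vl'[of s] A by (smt (verit) mult_nonneg_nonneg zero_le_power2)
  define p where "p x = x(1 := x 1 - 1)" for x :: site
  have fb: "finite (bdry d \<Lambda>)" by (rule finite_bdry[OF fin sub])
  define \<Psi> where "\<Psi> = (\<Sum>y\<in>bdry d \<Lambda>. (\<psi> y)\<^sup>2)"
  have \<Psi>0: "\<Psi> \<ge> 0" by (simp add: \<Psi>_def sum_nonneg)
  define s where "s = - (\<Sum>x\<in>\<Lambda>. \<bar>x 1\<bar>)"
  have sle: "s \<le> x 1" if "x \<in> \<Lambda>" for x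
  proof -
    have "\<bar>x 1\<bar> \<le> (\<Sum>x\<in>\<Lambda>. \<bar>x 1\<bar>)" by (rule member_le_sum[of x \<Lambda> "\<lambda>x. \<bar>x 1\<bar>"]) (use that fin in auto)
    then show ?thesis by (simp add: s_def)
  qed
  define cc where "cc n = (2::real)^(n+2) - 2" for n :: nat
  have cc2: "cc n \<ge> 2" for n
  proof -
    have "(2::real)^2 \<le> 2^(n+2)" by (rule power_increasing) auto
    then show ?thesis by (simp add: cc_def)
  qed
  define M where "M = (\<Sum>x\<in>\<Lambda>. cc (nat (x 1 - s)))"
  have M0: "M \<ge> 0" unfolding M_def using cc2 by (intro sum_nonneg) (smt (verit))
  define K0 where "K0 = B' * (\<Sum>x\<in>\<Lambda>. real (card (nbr d x)))"
  define c0 where "c0 = A / (2 * (M + 1))"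
  have c0: "c0 > 0" using A M0 by (simp add: c0_def)
  define K where "K = A / 2 * \<Psi> + K0 + (\<Sum>x\<in>\<Lambda>. (\<xi> x)\<^sup>2) / (2 * c0)"
  have main: "Ham d V \<Lambda> \<psi> \<xi> \<phi> \<ge> c0 / 2 * (\<Sum>x\<in>\<Lambda>. (\<phi> x)\<^sup>2) - K" for \<phi>
  proof -
    define \<phi>t where "\<phi>t y = (if y \<in> \<Lambda> then \<phi> y else \<psi> y)" for y
    define g where "g x = \<phi> x - \<phi>t (p x)" for x
    define G where "G = (\<Sum>x\<in>\<Lambda>. (g x)\<^sup>2)"
    have G0: "G \<ge> 0" by (simp add: G_def sum_nonneg)
    have gG: "(g x)\<^sup>2 \<le> G" if "x \<in> \<Lambda>" for x
      unfolding G_def by (rule member_le_sum[of x \<Lambda> "\<lambda>x. (g x)\<^sup>2"]) (use that fin in auto)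
    have pn: "p x \<in> nbr d x" "adj d (p x) x" if "x \<in> \<Lambda>" for x
      using pred_nbr[OF d, of x] that sub unfolding p_def by auto
    have pb: "p x \<in> bdry d \<Lambda>" if "x \<in> \<Lambda>" "p x \<notin> \<Lambda>" for x
      using pn[OF that(1)] that by (auto simp: bdry_def nbr_def)
    have hsl: "hs d V \<Lambda> \<psi> \<phi> x \<ge> A / 2 * (g x)\<^sup>2 - B' * real (card (nbr d x))" if x: "x \<in> \<Lambda>" for x
    proof -
      define tm where "tm y = (if y \<in> \<Lambda> then V (\<phi> x - \<phi> y) / 2 else V (\<phi> x - \<psi> y))" for y
      have fn: "finite (nbr d x)" using finite_nbr sub x by blast
      have tb: "tm y \<ge> - B'" for y using Vb[of "\<phi> x - \<phi> y"] Vb[of "\<phi> x - \<psi> y"] B'0 by (simp add: tm_def)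
      have tp: "tm (p x) \<ge> A / 2 * (g x)\<^sup>2 - B'"
      proof (cases "p x \<in> \<Lambda>")
        case True
        then have "tm (p x) = V (g x) / 2" by (simp add: tm_def g_def \<phi>t_def)
        then show ?thesis using Vl'[of "g x"] B'0 by simp
      next
        case False
        then have "tm (p x) = V (g x)" by (simp add: tm_def g_def \<phi>t_def)
        moreover have "A / 2 * (g x)\<^sup>2 \<le> A * (g x)\<^sup>2" using A by simp
        ultimately show ?thesis using Vl'[of "g x"] by simp
      qed
      have "hs d V \<Lambda> \<psi> \<phi> x = tm (p x) + (\<Sum>y\<in>nbr d x - {p x}. tm y)"
        unfolding hs_def tm_def[symmetric] by (rule sum.remove[OF fn pn(1)[OF x]])
      moreover have "(\<Sum>y\<in>nbr d x - {p x}. tm y) \<ge> (\<Sum>y\<in>nbr d x - {p x}. - B')"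
        by (rule sum_mono) (rule tb)
      moreover have "(\<Sum>y\<in>nbr d x - {p x}. - B') = - B' * real (card (nbr d x) - 1)"
        using fn pn(1)[OF x] by simp
      moreover have "real (card (nbr d x) - 1) + 1 \<le> real (card (nbr d x))"
      proof -
        have "card (nbr d x) \<ge> 1" using fn pn(1)[OF x] by (metis One_nat_def card_0_eq empty_iff less_one not_le)
        then show ?thesis by simp
      qed
      then have "B' * (real (card (nbr d x) - 1) + 1) \<le> B' * real (card (nbr d x))"
        using B'0 by (rule mult_left_mono)
      moreover have "B' * (real (card (nbr d x) - 1) + 1) = B' * real (card (nbr d x) - 1) + B'"
        by (simp add: algebra_simps)
      ultimately show ?thesis using tp by linarith
    qed
    have H1: "Ham d V \<Lambda> \<psi> \<xi> \<phi> \<ge> A / 2 * G - K0 - (\<Sum>x\<in>\<Lambda>. \<xi> x * \<phi> x)"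
    proof -
      have "(\<Sum>x\<in>\<Lambda>. hs d V \<Lambda> \<psi> \<phi> x) \<ge> (\<Sum>x\<in>\<Lambda>. A / 2 * (g x)\<^sup>2 - B' * real (card (nbr d x)))"
        by (rule sum_mono) (rule hsl)
      also have "(\<Sum>x\<in>\<Lambda>. A / 2 * (g x)\<^sup>2 - B' * real (card (nbr d x))) = A / 2 * G - K0"
        by (simp add: G_def K0_def sum_subtractf sum_distrib_left)
      finally show ?thesis using ham_nbr[OF fin sub, of V \<psi> \<xi> \<phi>] by linarith
    qed
    have poinc: "\<forall>x\<in>\<Lambda>. nat (x 1 - s) = n \<longrightarrow> (\<phi> x)\<^sup>2 \<le> cc n * (\<Psi> + G)" for n
    proof (induction n)
      case 0
      show ?case
      proof (intro ballI impI)
        fix x assume x: "x \<in> \<Lambda>" and n: "nat (x 1 - s) = 0"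
        have "p x \<notin> \<Lambda>"
        proof
          assume "p x \<in> \<Lambda>"
          then have "s \<le> x 1 - 1" using sle[of "p x"] by (simp add: p_def)
          then show False using n by simp
        qed
        then have e: "\<phi> x = \<psi> (p x) + g x" by (simp add: g_def \<phi>t_def)
        have "(\<psi> (p x))\<^sup>2 \<le> \<Psi>"
          unfolding \<Psi>_def by (rule member_le_sum[of "p x" _ "\<lambda>y. (\<psi> y)\<^sup>2"]) (use pb[OF x \<open>p x \<notin> \<Lambda>\<close>] fb in auto)
        moreover have "(\<psi> (p x) + g x)\<^sup>2 \<le> 2 * (\<psi> (p x))\<^sup>2 + 2 * (g x)\<^sup>2"
          by (smt (verit) sum_squares_bound power2_sum zero_le_power2 power2_diff)
        ultimately show "(\<phi> x)\<^sup>2 \<le> cc 0 * (\<Psi> + G)" using e gG[OF x] by (simp add: cc_def)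
      qed
    next
      case (Suc n)
      show ?case
      proof (intro ballI impI)
        fix x assume x: "x \<in> \<Lambda>" and n: "nat (x 1 - s) = Suc n"
        have q: "(a + b)\<^sup>2 \<le> 2 * a\<^sup>2 + 2 * b\<^sup>2" for a b :: real
          by (smt (verit) power2_sum zero_le_power2 power2_diff)
        have cS: "cc (Suc n) = 2 * cc n + 2" by (simp add: cc_def)
        show "(\<phi> x)\<^sup>2 \<le> cc (Suc n) * (\<Psi> + G)"
        proof (cases "p x \<in> \<Lambda>")
          case True
          then have e: "\<phi> x = \<phi> (p x) + g x" by (simp add: g_def \<phi>t_def)
          have "nat (p x 1 - s) = n" using n by (simp add: p_def)
          then have ih: "(\<phi> (p x))\<^sup>2 \<le> cc n * (\<Psi> + G)" using Suc.IH True by blast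
          have "(\<phi> x)\<^sup>2 \<le> 2 * (\<phi> (p x))\<^sup>2 + 2 * (g x)\<^sup>2" using e q by simp
          then show ?thesis using ih gG[OF x] cS \<Psi>0 by (simp add: algebra_simps)
        next
          case False
          then have e: "\<phi> x = \<psi> (p x) + g x" by (simp add: g_def \<phi>t_def)
          have "(\<psi> (p x))\<^sup>2 \<le> \<Psi>"
            unfolding \<Psi>_def by (rule member_le_sum[of "p x" _ "\<lambda>y. (\<psi> y)\<^sup>2"]) (use pb[OF x False] fb in auto)
          moreover have "(\<phi> x)\<^sup>2 \<le> 2 * (\<psi> (p x))\<^sup>2 + 2 * (g x)\<^sup>2" using e q by simp
          moreover have "2 * (\<Psi> + G) \<le> cc (Suc n) * (\<Psi> + G)"
            using cc2[of "Suc n"] \<Psi>0 G0 by (intro mult_right_mono) auto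
          moreover have "2 * (\<Psi> + G) = 2 * \<Psi> + 2 * G" by simp
          ultimately show ?thesis using gG[OF x] by linarith
        qed
      qed
    qed
    have sq: "(\<Sum>x\<in>\<Lambda>. (\<phi> x)\<^sup>2) \<le> (M + 1) * (\<Psi> + G)"
    proof -
      have "(\<Sum>x\<in>\<Lambda>. (\<phi> x)\<^sup>2) \<le> (\<Sum>x\<in>\<Lambda>. cc (nat (x 1 - s)) * (\<Psi> + G))"
        by (rule sum_mono) (use poinc in blast)
      also have "\<dots> = M * (\<Psi> + G)" by (simp add: M_def sum_distrib_right)
      also have "\<dots> \<le> (M + 1) * (\<Psi> + G)" using \<Psi>0 G0 by (intro mult_right_mono) auto
      finally show ?thesis .
    qed
    have AG: "A / 2 * G \<ge> c0 * (\<Sum>x\<in>\<Lambda>. (\<phi> x)\<^sup>2) - A / 2 * \<Psi>"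
    proof -
      have "c0 * (\<Sum>x\<in>\<Lambda>. (\<phi> x)\<^sup>2) \<le> c0 * ((M + 1) * (\<Psi> + G))"
        using sq c0 by (intro mult_left_mono) auto
      also have "c0 * ((M + 1) * (\<Psi> + G)) = A / 2 * (\<Psi> + G)"
      proof -
        have "M + 1 \<noteq> 0" using M0 by simp
        then show ?thesis by (simp add: c0_def field_simps)
      qed
      finally show ?thesis by (simp add: algebra_simps)
    qed
    have xi: "(\<Sum>x\<in>\<Lambda>. \<xi> x * \<phi> x) \<le> c0 / 2 * (\<Sum>x\<in>\<Lambda>. (\<phi> x)\<^sup>2) + (\<Sum>x\<in>\<Lambda>. (\<xi> x)\<^sup>2) / (2 * c0)"
    proof -
      have "\<xi> x * \<phi> x \<le> c0 / 2 * (\<phi> x)\<^sup>2 + (\<xi> x)\<^sup>2 / (2 * c0)" for x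
      proof -
        have "0 \<le> (c0 * \<phi> x - \<xi> x)\<^sup>2 / (2 * c0)" using c0 by simp
        also have "(c0 * \<phi> x - \<xi> x)\<^sup>2 / (2 * c0) = c0 / 2 * (\<phi> x)\<^sup>2 + (\<xi> x)\<^sup>2 / (2 * c0) - \<xi> x * \<phi> x"
          using c0 by (simp add: power2_eq_square field_simps)
        finally show ?thesis by simp
      qed
      then have "(\<Sum>x\<in>\<Lambda>. \<xi> x * \<phi> x) \<le> (\<Sum>x\<in>\<Lambda>. c0 / 2 * (\<phi> x)\<^sup>2 + (\<xi> x)\<^sup>2 / (2 * c0))"
        by (intro sum_mono) auto
      also have "\<dots> = c0 / 2 * (\<Sum>x\<in>\<Lambda>. (\<phi> x)\<^sup>2) + (\<Sum>x\<in>\<Lambda>. (\<xi> x)\<^sup>2) / (2 * c0)"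
        by (simp add: sum.distrib sum_distrib_left sum_divide_distrib)
      finally show ?thesis .
    qed
    show ?thesis using H1 AG xi unfolding K_def by linarith
  qed
  show ?thesis
    by (rule exI[of _ "c0 / 2"]) (use c0 main in auto)
qed


lemma ham_fin:
  fixes V :: "real \<Rightarrow> real"
  assumes d: "d \<ge> 1" and fin: "finite \<Lambda>" and sub: "\<Lambda> \<subseteq> lattice d"
    and A: "A > 0" and Vl: "\<And>s. V s \<ge> A * s\<^sup>2 - B" and Vc: "continuous_on UNIV V"
  shows "(\<integral>\<^sup>+\<phi>. ennreal (exp (- Ham d V \<Lambda> \<psi> \<xi> \<phi>)) \<partial>PL \<Lambda>) < \<infinity>"
proof -
  interpret product_sigma_finite "\<lambda>_::site. lborel::real measure" by standard
  obtain \<epsilon> K where e: "\<epsilon> > 0" and lb: "\<And>\<phi>. Ham d V \<Lambda> \<psi> \<xi> \<phi> \<ge> \<epsilon> * (\<Sum>x\<in>\<Lambda>. (\<phi> x)\<^sup>2) - K"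
    using ham_lower[OF d fin sub A Vl, of \<psi> \<xi>] by blast
  define h where "h = (\<lambda>(x::site) (t::real). ennreal (exp (- \<epsilon> * t\<^sup>2)))"
  have hm: "h x \<in> borel_measurable lborel" for x unfolding h_def by measurable
  have pw: "ennreal (exp (- Ham d V \<Lambda> \<psi> \<xi> \<phi>)) \<le> ennreal (exp K) * (\<Prod>x\<in>\<Lambda>. h x (\<phi> x))" for \<phi>
  proof -
    have "exp (- Ham d V \<Lambda> \<psi> \<xi> \<phi>) \<le> exp (K + (\<Sum>x\<in>\<Lambda>. - \<epsilon> * (\<phi> x)\<^sup>2))"
      using lb[of \<phi>] by (simp add: sum_distrib_left sum_negf)
    also have "\<dots> = exp K * (\<Prod>x\<in>\<Lambda>. exp (- \<epsilon> * (\<phi> x)\<^sup>2))"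
      by (simp add: exp_add exp_sum[OF fin])
    finally have "ennreal (exp (- Ham d V \<Lambda> \<psi> \<xi> \<phi>)) \<le> ennreal (exp K * (\<Prod>x\<in>\<Lambda>. exp (- \<epsilon> * (\<phi> x)\<^sup>2)))"
      by (rule ennreal_leI)
    also have "\<dots> = ennreal (exp K) * (\<Prod>x\<in>\<Lambda>. h x (\<phi> x))"
      by (simp add: h_def ennreal_mult prod_nonneg prod_ennreal)
    finally show ?thesis .
  qed
  have pm: "(\<lambda>\<phi>. \<Prod>x\<in>\<Lambda>. h x (\<phi> x)) \<in> borel_measurable (PL \<Lambda>)"
  proof (rule borel_measurable_prod_ennreal)
    fix x assume x: "x \<in> \<Lambda>"
    show "(\<lambda>\<phi>. h x (\<phi> x)) \<in> borel_measurable (PL \<Lambda>)"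
      by (rule measurable_compose[OF measurable_component_singleton[OF x] hm])
  qed
  have "(\<integral>\<^sup>+\<phi>. ennreal (exp (- Ham d V \<Lambda> \<psi> \<xi> \<phi>)) \<partial>PL \<Lambda>) \<le> (\<integral>\<^sup>+\<phi>. ennreal (exp K) * (\<Prod>x\<in>\<Lambda>. h x (\<phi> x)) \<partial>PL \<Lambda>)"
    by (rule nn_integral_mono) (rule pw)
  also have "\<dots> = ennreal (exp K) * (\<integral>\<^sup>+\<phi>. (\<Prod>x\<in>\<Lambda>. h x (\<phi> x)) \<partial>PL \<Lambda>)"
    by (rule nn_integral_cmult[OF pm])
  also have "(\<integral>\<^sup>+\<phi>. (\<Prod>x\<in>\<Lambda>. h x (\<phi> x)) \<partial>PL \<Lambda>) = (\<Prod>x\<in>\<Lambda>. integral\<^sup>N lborel (h x))"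
    by (rule product_nn_integral_prod[OF fin hm])
  also have "(\<Prod>x\<in>\<Lambda>. integral\<^sup>N lborel (h x)) < \<infinity>"
  proof -
    have lt: "integral\<^sup>N lborel (h x) < \<infinity>" for x unfolding h_def using gauss_fin[OF e] by simp
    have nt: "integral\<^sup>N lborel (h x) \<noteq> top" for x using lt[of x] by simp
    then have "(\<Prod>x\<in>\<Lambda>. integral\<^sup>N lborel (h x)) \<noteq> top" unfolding ennreal_prod_eq_top by auto
    then show ?thesis by (simp add: top.not_eq_extremum)
  qed
  then have "ennreal (exp K) * (\<Prod>x\<in>\<Lambda>. integral\<^sup>N lborel (h x)) < \<infinity>"
    by (simp add: ennreal_mult_less_top)
  finally show ?thesis by simp
qed



lemma exp_meas:
  assumes "finite K" "K \<subseteq> I" "continuous_on UNIV V"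
  shows "(\<lambda>\<phi>. exp (- Ham d V K \<psi> \<xi> \<phi>)) \<in> borel_measurable (PL I)"
    and "(\<lambda>\<phi>. ennreal (exp (- Ham d V K \<psi> \<xi> \<phi>))) \<in> borel_measurable (PL I)"
proof -
  have h: "(\<lambda>\<phi>. Ham d V K \<psi> \<xi> \<phi>) \<in> borel_measurable (PL I)" by (rule ham_meas[OF assms])
  show 1: "(\<lambda>\<phi>. exp (- Ham d V K \<psi> \<xi> \<phi>)) \<in> borel_measurable (PL I)"
    by (rule measurable_compose[OF borel_measurable_uminus[OF h] borel_measurable_exp])
  show "(\<lambda>\<phi>. ennreal (exp (- Ham d V K \<psi> \<xi> \<phi>))) \<in> borel_measurable (PL I)"
    by (rule measurable_compose[OF 1 measurable_ennreal])
qed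

lemma Zpart_facts:
  fixes V :: "real \<Rightarrow> real"
  assumes d: "d \<ge> 1" and fin: "finite K" and sub: "K \<subseteq> lattice d"
    and A: "A > 0" and Vl: "\<And>s. V s \<ge> A * s\<^sup>2 - B" and Vc: "continuous_on UNIV V"
  shows "(\<integral>\<^sup>+\<phi>. ennreal (exp (- Ham d V K \<psi> \<xi> \<phi>)) \<partial>PL K) = ennreal (Zpart d V K \<psi> \<xi>)"
    and "Zpart d V K \<psi> \<xi> > 0"
proof -
  let ?N = "(\<integral>\<^sup>+\<phi>. ennreal (exp (- Ham d V K \<psi> \<xi> \<phi>)) \<partial>PL K)"
  have Z: "Zpart d V K \<psi> \<xi> = enn2real ?N"
    unfolding Zpart_def by (rule integral_eq_nn_integral[OF exp_meas(1)[OF fin order_refl Vc]]) simp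
  have f: "?N < \<infinity>" by (rule ham_fin[OF d fin sub A Vl Vc])
  have p: "?N > 0" by (rule nn_pos[OF fin exp_meas(2)[OF fin order_refl Vc]]) simp
  show e: "?N = ennreal (Zpart d V K \<psi> \<xi>)" using f unfolding Z by (simp add: less_top)
  show "Zpart d V K \<psi> \<xi> > 0" using p f unfolding Z by (simp add: enn2real_positive_iff less_top)
qed

lemma amgm_exp: fixes a b :: real shows "exp (- a) + exp (- b) \<ge> 2 * exp (- (a + b) / 2)"
proof -
  define p where "p = exp (- a / 2)"
  define q where "q = exp (- b / 2)"
  have "exp (- a) = p * p" unfolding p_def by (simp add: exp_add[symmetric])
  moreover have "exp (- b) = q * q" unfolding q_def by (simp add: exp_add[symmetric])
  moreover have "exp (- (a + b) / 2) = p * q" unfolding p_def q_def by (simp add: exp_add[symmetric] field_simps)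
  moreover have "0 \<le> (p - q)\<^sup>2" by simp
  ultimately show ?thesis by (simp add: power2_eq_square algebra_simps)
qed


lemma split_ineq:
  fixes V :: "real \<Rightarrow> real" and \<psi> \<xi> :: "site \<Rightarrow> real"
  assumes d: "d \<ge> 1"
    and fin: "finite L1" "finite S" "finite L2"
    and sub: "L1 \<subseteq> lattice d" "S \<subseteq> lattice d" "L2 \<subseteq> lattice d"
    and disj: "L1 \<inter> S = {}" "L1 \<inter> L2 = {}" "S \<inter> L2 = {}"
    and nadj: "\<And>x y. x \<in> L1 \<Longrightarrow> y \<in> L2 \<Longrightarrow> \<not> adj d x y"
    and ev: "\<And>s. V (- s) = V s"
    and Vs: "\<And>c s. V (c + s) + V (c - s) \<le> 2 * V c + 2 * C2 * s\<^sup>2" and C2: "C2 \<ge> 0"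
    and A: "A > 0" and Vl: "\<And>s. V s \<ge> A * s\<^sup>2 - B" and Vc: "continuous_on UNIV V"
  shows "Zpart d V (L1 \<union> S \<union> L2) \<psi> \<xi> \<ge>
     exp ((\<Sum>x\<in>S. \<xi> x * \<psi> x) - (\<Sum>x\<in>S. \<Sum>y\<in>nbr d x. 2 * \<bar>V (\<psi> x - \<psi> y)\<bar> + 4 * C2) / 2)
     * Zpart d V L1 \<psi> \<xi> * Zpart d V L2 \<psi> \<xi>"
proof -
  interpret product_sigma_finite "\<lambda>_::site. lborel::real measure" by standard
  define L where "L = L1 \<union> S \<union> L2"
  have finL: "finite L" and subL: "L \<subseteq> lattice d" using fin sub by (auto simp: L_def)
  have SL: "S \<subseteq> L" and L1L: "L1 \<subseteq> L" and L2L: "L2 \<subseteq> L" by (auto simp: L_def)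
  define bd where "bd = (\<Sum>x\<in>S. \<Sum>y\<in>nbr d x. 2 * \<bar>V (\<psi> x - \<psi> y)\<bar> + 4 * C2) / 2"
  define X where "X = (\<Sum>x\<in>S. \<xi> x * \<psi> x) - bd"
  define Bx where "Bx = PiE S (\<lambda>x. {\<psi> x - 1..\<psi> x + 1})"
  have Bm: "Bx \<in> sets (PL S)" unfolding Bx_def by (rule sets_PiM_I_finite) (use fin in auto)
  define ind where "ind \<phi> = (indicator Bx (restrict \<phi> S) :: ennreal)" for \<phi> :: "site \<Rightarrow> real"
  define R where "R = (\<lambda>\<phi>::site\<Rightarrow>real. \<lambda>x\<in>L. if x \<in> S then 2 * \<psi> x - \<phi> x else \<phi> x)"
  define f where "f \<phi> = ennreal (exp (- Ham d V L \<psi> \<xi> \<phi>))" for \<phi>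
  define e1 where "e1 \<phi> = ennreal (exp (- Ham d V L1 \<psi> \<xi> \<phi>))" for \<phi>
  define e2 where "e2 \<phi> = ennreal (exp (- Ham d V L2 \<psi> \<xi> \<phi>))" for \<phi>
  define NN where "NN K = (\<integral>\<^sup>+\<phi>. ennreal (exp (- Ham d V K \<psi> \<xi> \<phi>)) \<partial>PL K)" for K
  have NNZ: "NN K = ennreal (Zpart d V K \<psi> \<xi>)" "Zpart d V K \<psi> \<xi> > 0"
    if "finite K" "K \<subseteq> lattice d" for K
    using Zpart_facts[OF d that A Vl Vc, of \<psi> \<xi>] by (auto simp: NN_def)
  have mf: "f \<in> borel_measurable (PL L)" unfolding f_def by (rule exp_meas(2)[OF finL order_refl Vc])
  have me1: "e1 \<in> borel_measurable (PL L)" unfolding e1_def by (rule exp_meas(2)[OF fin(1) L1L Vc])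
  have me2: "e2 \<in> borel_measurable (PL L)" unfolding e2_def by (rule exp_meas(2)[OF fin(3) L2L Vc])
  have mind: "ind \<in> borel_measurable (PL L)"
    unfolding ind_def by (rule measurable_compose[OF measurable_restrict_subset[OF SL] borel_measurable_indicator[OF Bm]])
  have Rm: "R \<in> measurable (PL L) (PL L)" unfolding R_def by (rule reflect_distr(2)[OF finL])
  have ind01: "ind \<phi> = 0 \<or> ind \<phi> = 1" for \<phi> by (simp add: ind_def indicator_def)
  have indR: "ind (R \<phi>) = ind \<phi>" for \<phi>
  proof -
    have "restrict (R \<phi>) S \<in> Bx \<longleftrightarrow> restrict \<phi> S \<in> Bx"
      using SL by (auto simp: Bx_def R_def PiE_iff)
    then show ?thesis by (simp add: ind_def indicator_def)
  qed
  have ind1: "\<bar>\<phi> x - \<psi> x\<bar> \<le> 1" if "ind \<phi> = 1" "x \<in> S" for \<phi> x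
  proof -
    have "restrict \<phi> S \<in> Bx" using that(1) by (simp add: ind_def indicator_def split: if_splits)
    then have "\<phi> x \<in> {\<psi> x - 1..\<psi> x + 1}" using that(2) by (auto simp: Bx_def PiE_iff)
    then show ?thesis by auto
  qed
  have pw: "ind \<phi> * f \<phi> + ind \<phi> * f (R \<phi>) \<ge> ennreal (2 * exp X) * (ind \<phi> * e1 \<phi> * e2 \<phi>)" for \<phi>
  proof (cases "ind \<phi> = 0")
    case True then show ?thesis by simp
  next
    case False
    then have i1: "ind \<phi> = 1" using ind01 by blast
    define \<phi>' where "\<phi>' = (\<lambda>x. if x \<in> S then 2 * \<psi> x - \<phi> x else \<phi> x)"
    have HR: "Ham d V L \<psi> \<xi> (R \<phi>) = Ham d V L \<psi> \<xi> \<phi>'"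
      by (rule ham_cong) (simp add: R_def \<phi>'_def)
    have ma: "Ham d V L \<psi> \<xi> \<phi> + Ham d V L \<psi> \<xi> \<phi>'
         \<le> 2 * Ham d V L1 \<psi> \<xi> \<phi> + 2 * Ham d V L2 \<psi> \<xi> \<phi> - 2 * (\<Sum>x\<in>S. \<xi> x * \<psi> x) + 2 * bd"
      using main_alg[OF fin sub disj nadj ev Vs C2 ind1[OF i1], where \<xi>=\<xi>] unfolding L_def[symmetric] \<phi>'_def bd_def
      by simp
    have am: "exp (- Ham d V L \<psi> \<xi> \<phi>) + exp (- Ham d V L \<psi> \<xi> \<phi>') \<ge> 2 * exp (- (Ham d V L \<psi> \<xi> \<phi> + Ham d V L \<psi> \<xi> \<phi>') / 2)"
      by (rule amgm_exp)
    have mo: "exp (- (Ham d V L \<psi> \<xi> \<phi> + Ham d V L \<psi> \<xi> \<phi>') / 2) \<ge> exp (X + (- Ham d V L1 \<psi> \<xi> \<phi>) + (- Ham d V L2 \<psi> \<xi> \<phi>))"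
      using ma unfolding X_def by simp
    have e3: "exp X * exp (- Ham d V L1 \<psi> \<xi> \<phi>) * exp (- Ham d V L2 \<psi> \<xi> \<phi>) = exp (X + (- Ham d V L1 \<psi> \<xi> \<phi>) + (- Ham d V L2 \<psi> \<xi> \<phi>))"
      by (simp only: exp_add)
    have r: "exp (- Ham d V L \<psi> \<xi> \<phi>) + exp (- Ham d V L \<psi> \<xi> \<phi>') \<ge> 2 * exp X * exp (- Ham d V L1 \<psi> \<xi> \<phi>) * exp (- Ham d V L2 \<psi> \<xi> \<phi>)"
      using am mo e3 by (simp only: mult.assoc)
    have "ennreal (2 * exp X) * (ind \<phi> * e1 \<phi> * e2 \<phi>) = ennreal (2 * exp X * exp (- Ham d V L1 \<psi> \<xi> \<phi>) * exp (- Ham d V L2 \<psi> \<xi> \<phi>))"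
      using i1 by (simp add: e1_def e2_def ennreal_mult mult.assoc)
    also have "\<dots> \<le> ennreal (exp (- Ham d V L \<psi> \<xi> \<phi>) + exp (- Ham d V L \<psi> \<xi> \<phi>'))"
      using r by (rule ennreal_leI)
    also have "\<dots> = ind \<phi> * f \<phi> + ind \<phi> * f (R \<phi>)"
      using i1 HR by (simp add: f_def)
    finally show ?thesis .
  qed
  have NL: "NN L = (\<integral>\<^sup>+\<phi>. f \<phi> \<partial>PL L)" by (simp add: NN_def f_def)
  have le1: "(\<integral>\<^sup>+\<phi>. ind \<phi> * f \<phi> \<partial>PL L) \<le> NN L"
    unfolding NL
  proof (rule nn_integral_mono)
    fix \<phi> show "ind \<phi> * f \<phi> \<le> f \<phi>" using ind01[of \<phi>] by (elim disjE) simp_all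
  qed
  have refl: "(\<integral>\<^sup>+\<phi>. ind \<phi> * f (R \<phi>) \<partial>PL L) = (\<integral>\<^sup>+\<phi>. ind \<phi> * f \<phi> \<partial>PL L)"
  proof -
    have "(\<integral>\<^sup>+\<phi>. ind \<phi> * f (R \<phi>) \<partial>PL L) = (\<integral>\<^sup>+\<phi>. (\<lambda>\<phi>. ind \<phi> * f \<phi>) (R \<phi>) \<partial>PL L)"
      by (simp add: indR)
    also have "\<dots> = (\<integral>\<^sup>+\<phi>. ind \<phi> * f \<phi> \<partial>PL L)"
      unfolding R_def by (rule reflect_nn[OF finL]) (rule borel_measurable_times_ennreal[OF mind mf])
    finally show ?thesis .
  qed
  have mfR: "(\<lambda>\<phi>. ind \<phi> * f (R \<phi>)) \<in> borel_measurable (PL L)"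
    by (rule borel_measurable_times_ennreal[OF mind measurable_compose[OF Rm mf]])
  have "ennreal (2 * exp X) * (\<integral>\<^sup>+\<phi>. ind \<phi> * e1 \<phi> * e2 \<phi> \<partial>PL L) = (\<integral>\<^sup>+\<phi>. ennreal (2 * exp X) * (ind \<phi> * e1 \<phi> * e2 \<phi>) \<partial>PL L)"
    by (rule nn_integral_cmult[symmetric]) (intro borel_measurable_times_ennreal mind me1 me2)
  also have "\<dots> \<le> (\<integral>\<^sup>+\<phi>. ind \<phi> * f \<phi> + ind \<phi> * f (R \<phi>) \<partial>PL L)"
    by (rule nn_integral_mono) (rule pw)
  also have "\<dots> = (\<integral>\<^sup>+\<phi>. ind \<phi> * f \<phi> \<partial>PL L) + (\<integral>\<^sup>+\<phi>. ind \<phi> * f (R \<phi>) \<partial>PL L)"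
    by (rule nn_integral_add[OF borel_measurable_times_ennreal[OF mind mf] mfR])
  also have "\<dots> \<le> NN L + NN L" unfolding refl using le1 by (intro add_mono) auto
  finally have big: "ennreal (2 * exp X) * (\<integral>\<^sup>+\<phi>. ind \<phi> * e1 \<phi> * e2 \<phi> \<partial>PL L) \<le> NN L + NN L" .
  have fact: "(\<integral>\<^sup>+\<phi>. ind \<phi> * e1 \<phi> * e2 \<phi> \<partial>PL L) = ennreal (2 ^ card S) * NN L1 * NN L2"
  proof -
    define F1 where "F1 \<phi> = ennreal (exp (- Ham d V L1 \<psi> \<xi> \<phi>))" for \<phi>
    define F2 where "F2 \<phi> = ind \<phi> * ennreal (exp (- Ham d V L2 \<psi> \<xi> \<phi>))" for \<phi>
    have LL: "L = L1 \<union> (S \<union> L2)" by (auto simp: L_def)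
    have mF1: "F1 \<in> borel_measurable (PL L1)" unfolding F1_def by (rule exp_meas(2)[OF fin(1) order_refl Vc])
    have mind2: "ind \<in> borel_measurable (PL (S \<union> L2))"
      unfolding ind_def by (rule measurable_compose[OF measurable_restrict_subset borel_measurable_indicator[OF Bm]]) auto
    have mF2: "F2 \<in> borel_measurable (PL (S \<union> L2))"
      unfolding F2_def by (rule borel_measurable_times_ennreal[OF mind2 exp_meas(2)[OF fin(3) _ Vc]]) auto
    have eqI: "ind \<phi> * e1 \<phi> * e2 \<phi> = F1 (restrict \<phi> L1) * F2 (restrict \<phi> (S \<union> L2))" for \<phi>
    proof -
      have "Ham d V L1 \<psi> \<xi> (restrict \<phi> L1) = Ham d V L1 \<psi> \<xi> \<phi>" by (rule ham_cong) simp
      moreover have "Ham d V L2 \<psi> \<xi> (restrict \<phi> (S \<union> L2)) = Ham d V L2 \<psi> \<xi> \<phi>" by (rule ham_cong) simp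
      moreover have "ind (restrict \<phi> (S \<union> L2)) = ind \<phi>"
      proof -
        have "(S \<union> L2) \<inter> S = S" by auto
        then show ?thesis by (simp add: ind_def)
      qed
      ultimately show ?thesis by (simp add: F1_def F2_def e1_def e2_def mult_ac)
    qed
    have "(\<integral>\<^sup>+\<phi>. ind \<phi> * e1 \<phi> * e2 \<phi> \<partial>PL L) = (\<integral>\<^sup>+\<phi>. F1 (restrict \<phi> L1) * F2 (restrict \<phi> (S \<union> L2)) \<partial>PL (L1 \<union> (S \<union> L2)))"
      unfolding eqI LL[symmetric] ..
    also have "\<dots> = (\<integral>\<^sup>+\<phi>. F1 \<phi> \<partial>PL L1) * (\<integral>\<^sup>+\<phi>. F2 \<phi> \<partial>PL (S \<union> L2))"
      by (rule prod_split[OF _ fin(1) _ mF1 mF2]) (use disj fin in auto)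
    also have "(\<integral>\<^sup>+\<phi>. F1 \<phi> \<partial>PL L1) = NN L1" by (simp add: F1_def NN_def)
    also have "(\<integral>\<^sup>+\<phi>. F2 \<phi> \<partial>PL (S \<union> L2)) = ennreal (2 ^ card S) * NN L2"
    proof -
      define G2 where "G2 \<phi> = ennreal (exp (- Ham d V L2 \<psi> \<xi> \<phi>))" for \<phi>
      have mG2: "G2 \<in> borel_measurable (PL L2)" unfolding G2_def by (rule exp_meas(2)[OF fin(3) order_refl Vc])
      have eq2: "F2 \<phi> = indicator Bx (restrict \<phi> S) * G2 (restrict \<phi> L2)" for \<phi>
      proof -
        have "Ham d V L2 \<psi> \<xi> (restrict \<phi> L2) = Ham d V L2 \<psi> \<xi> \<phi>" by (rule ham_cong) simp
        then show ?thesis by (simp add: F2_def G2_def ind_def)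
      qed
      have "(\<integral>\<^sup>+\<phi>. F2 \<phi> \<partial>PL (S \<union> L2)) = (\<integral>\<^sup>+\<phi>. indicator Bx \<phi> \<partial>PL S) * (\<integral>\<^sup>+\<phi>. G2 \<phi> \<partial>PL L2)"
        unfolding eq2 by (rule prod_split[OF disj(3) fin(2) fin(3) borel_measurable_indicator[OF Bm] mG2])
      also have "(\<integral>\<^sup>+\<phi>. indicator Bx \<phi> \<partial>PL S) = emeasure (PL S) Bx" using Bm by simp
      also have "\<dots> = (\<Prod>x\<in>S. emeasure lborel {\<psi> x - 1..\<psi> x + 1})"
        unfolding Bx_def by (rule emeasure_PiM[OF fin(2)]) simp
      also have "\<dots> = (\<Prod>x\<in>S. ennreal 2)" by (rule prod.cong) auto
      also have "\<dots> = ennreal 2 ^ card S" by (rule prod_constant)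
      also have "\<dots> = ennreal (2 ^ card S)" by (rule ennreal_power) simp
      also have "(\<integral>\<^sup>+\<phi>. G2 \<phi> \<partial>PL L2) = NN L2" by (simp add: G2_def NN_def)
      finally show ?thesis .
    qed
    finally show ?thesis by (simp add: mult_ac)
  qed
  have Z: "NN L = ennreal (Zpart d V L \<psi> \<xi>)" "NN L1 = ennreal (Zpart d V L1 \<psi> \<xi>)" "NN L2 = ennreal (Zpart d V L2 \<psi> \<xi>)"
    by (rule NNZ(1)[OF finL subL], rule NNZ(1)[OF fin(1) sub(1)], rule NNZ(1)[OF fin(3) sub(3)])
  have Zp: "Zpart d V L \<psi> \<xi> > 0" "Zpart d V L1 \<psi> \<xi> > 0" "Zpart d V L2 \<psi> \<xi> > 0"
    by (rule NNZ(2)[OF finL subL], rule NNZ(2)[OF fin(1) sub(1)], rule NNZ(2)[OF fin(3) sub(3)])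
  define z where "z = Zpart d V L \<psi> \<xi>"
  define z1 where "z1 = Zpart d V L1 \<psi> \<xi>"
  define z2 where "z2 = Zpart d V L2 \<psi> \<xi>"
  have zp: "z > 0" "z1 > 0" "z2 > 0" using Zp by (simp_all add: z_def z1_def z2_def)
  have q1: "ennreal (2 * exp X * (2 ^ card S * z1 * z2)) = ennreal (2 * exp X) * ennreal (2 ^ card S * z1 * z2)"
    by (rule ennreal_mult) (use zp in auto)
  have q2: "ennreal (2 ^ card S * z1 * z2) = ennreal (2 ^ card S) * ennreal z1 * ennreal z2"
  proof -
    have "ennreal (2 ^ card S * z1 * z2) = ennreal (2 ^ card S * z1) * ennreal z2"
      by (rule ennreal_mult) (use zp in auto)
    also have "ennreal (2 ^ card S * z1) = ennreal (2 ^ card S) * ennreal z1"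
      by (rule ennreal_mult) (use zp in auto)
    finally show ?thesis .
  qed
  have q3: "ennreal z + ennreal z = ennreal (2 * z)"
  proof -
    have e: "2 * z = z + z" by simp
    show ?thesis unfolding e by (rule ennreal_plus[symmetric]) (use zp in auto)
  qed
  have "ennreal (2 * exp X * (2 ^ card S * z1 * z2)) \<le> ennreal (2 * z)"
    using big unfolding fact Z z_def[symmetric] z1_def[symmetric] z2_def[symmetric] q1 q2 q3 .
  then have "2 * exp X * (2 ^ card S * z1 * z2) \<le> 2 * z"
    by (rule ennreal_le_iff[THEN iffD1, rotated]) (use zp in simp)
  then have a1: "exp X * (2 ^ card S * z1 * z2) \<le> z" by linarith
  have p1: "(1::real) \<le> 2 ^ card S" by (rule one_le_power) simp
  have "1 * (z1 * z2) \<le> 2 ^ card S * (z1 * z2)"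
    by (rule mult_right_mono[OF p1]) (use zp in simp)
  then have "exp X * (1 * (z1 * z2)) \<le> exp X * (2 ^ card S * (z1 * z2))"
    by (rule mult_left_mono) simp
  then have "exp X * z1 * z2 \<le> z" using a1 by (simp only: mult_1 mult.assoc)
  then show ?thesis unfolding z_def z1_def z2_def L_def X_def bd_def .
qed


theorem lemma3p2:
  fixes d :: nat and V :: "real \<Rightarrow> real" and A B C2 :: real and u :: "nat \<Rightarrow> real"
  assumes d: "d \<ge> 1"
    and V_diff: "\<And>s. V differentiable (at s)"
    and V'_diff: "\<And>s. deriv V differentiable (at s)"
    and V''_cont: "continuous_on UNIV (deriv (deriv V))"
    and V_even: "\<And>s. V (- s) = V s"
    and A: "A > 0" and V_lower: "\<And>s. V s \<ge> A * s\<^sup>2 - B"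
    and C2: "C2 > 0" and V_upper: "\<And>s. deriv (deriv V) s \<le> C2"
  shows "\<exists>C>0. \<forall>(\<xi>::site \<Rightarrow> real) (a::site) (l::site) (l1'::int).
           a \<in> lattice d \<longrightarrow> l \<in> lattice d \<longrightarrow> (\<forall>i\<in>{1..d}. a i < l i) \<longrightarrow>
           a 1 < l1' \<longrightarrow> l1' < l 1 \<longrightarrow>
           - ln (Zpart d V (box d a l) (psi d u) \<xi>)
           \<le> - ln (Zpart d V (box_strip d a l (a 1) (l1' - 1)) (psi d u) \<xi>)
             - ln (Zpart d V (box_strip d a l (l1' + 1) (l 1)) (psi d u) \<xi>)
             - (\<Prod>i=2..d. real_of_int (l i - a i + 1)) * (ln C - (\<Sum>i=2..d. V (u i)))
             - (\<Sum>x\<in>box_slice d a l l1'.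
                  (u 1 * real_of_int l1' + (\<Sum>i=2..d. u i * real_of_int (x i))) * \<xi> x)"
proof -
  have Vc: "continuous_on UNIV V"
    by (rule continuous_at_imp_continuous_on) (auto intro: differentiable_imp_continuous_within V_diff)
  have C2': "C2 \<ge> 0" using C2 by simp
  have Vs: "\<And>c s. V (c + s) + V (c - s) \<le> 2 * V c + 2 * C2 * s\<^sup>2"
    by (rule V_sym[OF V_diff V'_diff V_upper C2'])
  define Mu where "Mu = (\<Sum>i=1..d. \<bar>V (u i)\<bar>)"
  have Mu0: "Mu \<ge> 0" unfolding Mu_def by (rule sum_nonneg) simp
  define Q where "Q = real d * (2 * Mu + 4 * C2)"
  have Q0: "Q \<ge> 0" unfolding Q_def using Mu0 C2' by simp
  define C where "C = exp (- (Q + Mu))"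
  show ?thesis
  proof (intro exI[of _ C] conjI allI impI)
    show "C > 0" by (simp add: C_def)
    fix \<xi> :: "site \<Rightarrow> real" and a l :: site and l1' :: int
    assume al: "a \<in> lattice d" "l \<in> lattice d" "\<forall>i\<in>{1..d}. a i < l i" "a 1 < l1'" "l1' < l 1"
    define \<psi> where "\<psi> = psi d u"
    define L1 where "L1 = box_strip d a l (a 1) (l1' - 1)"
    define S where "S = box_slice d a l l1'"
    define L2 where "L2 = box_strip d a l (l1' + 1) (l 1)"
    have d1: "{1..d} = insert (1::nat) {2..d}" using d by auto
    have U: "box d a l = L1 \<union> S \<union> L2"
      unfolding L1_def S_def L2_def box_def box_strip_def box_slice_def d1 using al by auto
    have fin: "finite L1" "finite S" "finite L2" using finite_box[of d a l] unfolding U by auto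
    have sub: "L1 \<subseteq> lattice d" "S \<subseteq> lattice d" "L2 \<subseteq> lattice d"
      unfolding L1_def S_def L2_def box_strip_def box_slice_def by auto
    have disj: "L1 \<inter> S = {}" "L1 \<inter> L2 = {}" "S \<inter> L2 = {}"
      unfolding L1_def S_def L2_def box_strip_def box_slice_def by auto
    have nadj: "\<not> adj d x y" if "x \<in> L1" "y \<in> L2" for x y
    proof
      assume "adj d x y"
      then have "\<bar>x 1 - y 1\<bar> \<le> 1" by (rule adj_le1) (use d in auto)
      moreover have "x 1 \<le> l1' - 1" "y 1 \<ge> l1' + 1" using that by (auto simp: L1_def L2_def box_strip_def)
      ultimately show False by linarith
    qed
    define bd where "bd = (\<Sum>x\<in>S. \<Sum>y\<in>nbr d x. 2 * \<bar>V (\<psi> x - \<psi> y)\<bar> + 4 * C2) / 2"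
    define X where "X = (\<Sum>x\<in>S. \<xi> x * \<psi> x) - bd"
    define z where "z = Zpart d V (box d a l) \<psi> \<xi>"
    define z1 where "z1 = Zpart d V L1 \<psi> \<xi>"
    define z2 where "z2 = Zpart d V L2 \<psi> \<xi>"
    have main: "z \<ge> exp X * z1 * z2"
      using split_ineq[OF d fin sub disj nadj V_even Vs C2' A V_lower Vc, where \<psi>=\<psi> and \<xi>=\<xi>]
      unfolding z_def z1_def z2_def U X_def bd_def .
    have z1p: "z1 > 0" unfolding z1_def by (rule Zpart_facts(2)[OF d fin(1) sub(1) A V_lower Vc])
    have z2p: "z2 > 0" unfolding z2_def by (rule Zpart_facts(2)[OF d fin(3) sub(3) A V_lower Vc])
    have ezz: "exp X * z1 * z2 > 0" using z1p z2p by simp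
    have lnz: "ln z \<ge> X + ln z1 + ln z2"
    proof -
      have "ln (exp X * z1 * z2) \<le> ln z" using main ezz by (subst ln_le_cancel_iff) auto
      moreover have "ln (exp X * z1 * z2) = X + ln z1 + ln z2"
        using z1p z2p by (simp add: ln_mult)
      ultimately show ?thesis by simp
    qed
    have bdb: "bd \<le> real (card S) * Q"
    proof -
      have inner: "(\<Sum>y\<in>nbr d x. 2 * \<bar>V (\<psi> x - \<psi> y)\<bar> + 4 * C2) \<le> 2 * Q" if x: "x \<in> S" for x
      proof -
        have xl: "x \<in> lattice d" using x sub by auto
        have "(\<Sum>y\<in>nbr d x. 2 * \<bar>V (\<psi> x - \<psi> y)\<bar> + 4 * C2) \<le> of_nat (card (nbr d x)) * (2 * Mu + 4 * C2)"
        proof (rule sum_bounded_above)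
          fix y assume y: "y \<in> nbr d x"
          have "\<bar>V (\<psi> x - \<psi> y)\<bar> \<le> Mu" unfolding \<psi>_def Mu_def by (rule V_psi_bound[where V=V, OF V_even xl y])
          then show "2 * \<bar>V (\<psi> x - \<psi> y)\<bar> + 4 * C2 \<le> 2 * Mu + 4 * C2" by simp
        qed
        also have "\<dots> \<le> real (2 * d) * (2 * Mu + 4 * C2)"
          by (rule mult_right_mono) (use card_nbr[OF xl] Mu0 C2' in auto)
        also have "\<dots> = 2 * Q" by (simp add: Q_def)
        finally show ?thesis .
      qed
      have "(\<Sum>x\<in>S. \<Sum>y\<in>nbr d x. 2 * \<bar>V (\<psi> x - \<psi> y)\<bar> + 4 * C2) \<le> of_nat (card S) * (2 * Q)"
        by (rule sum_bounded_above) (rule inner)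
      then show ?thesis unfolding bd_def by simp
    qed
    define P where "P = (\<Prod>i=2..d. real_of_int (l i - a i + 1))"
    have cardS: "real (card S) \<le> P"
    proof -
      have Sb: "S = box d (a(1 := l1')) (l(1 := l1'))"
        unfolding S_def slice_eq_strip by (rule strip_eq_box[OF d])
      have "card S \<le> (\<Prod>i=1..d. nat ((l(1 := l1')) i - (a(1 := l1')) i + 1))"
        unfolding Sb by (rule card_box)
      also have "\<dots> = (\<Prod>i=2..d. nat (l i - a i + 1))"
        unfolding d1 by (simp add: prod.insert)
      finally have "real (card S) \<le> real (\<Prod>i=2..d. nat (l i - a i + 1))" by (simp only: of_nat_le_iff)
      also have "\<dots> = P" unfolding P_def of_nat_prod
      proof (rule prod.cong)
        fix i assume i: "i \<in> {2..d}"
        then have "a i < l i" using al(3) by auto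
        then show "real (nat (l i - a i + 1)) = real_of_int (l i - a i + 1)" by simp
      qed simp
      finally show ?thesis .
    qed
    have P0: "P \<ge> 0" unfolding P_def
    proof (rule prod_nonneg)
      fix i assume "i \<in> {2..d}"
      then have "a i < l i" using al(3) by auto
      then show "0 \<le> real_of_int (l i - a i + 1)" by simp
    qed
    have sumV: "(\<Sum>i=2..d. V (u i)) \<ge> - Mu"
    proof -
      have "(\<Sum>i=2..d. - \<bar>V (u i)\<bar>) \<le> (\<Sum>i=2..d. V (u i))" by (rule sum_mono) simp
      moreover have "(\<Sum>i=2..d. \<bar>V (u i)\<bar>) \<le> Mu" unfolding Mu_def by (rule sum_mono2) auto
      ultimately show ?thesis by (simp add: sum_negf)
    qed
    have lnC: "ln C - (\<Sum>i=2..d. V (u i)) \<le> - Q" using sumV by (simp add: C_def)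
    have Pterm: "P * (ln C - (\<Sum>i=2..d. V (u i))) \<le> - (real (card S) * Q)"
    proof -
      have "P * (ln C - (\<Sum>i=2..d. V (u i))) \<le> P * (- Q)" by (rule mult_left_mono[OF lnC P0])
      also have "\<dots> \<le> real (card S) * (- Q)" by (rule mult_right_mono_neg[OF cardS]) (use Q0 in simp)
      finally show ?thesis by simp
    qed
    have xisum: "(\<Sum>x\<in>S. (u 1 * real_of_int l1' + (\<Sum>i=2..d. u i * real_of_int (x i))) * \<xi> x) = (\<Sum>x\<in>S. \<xi> x * \<psi> x)"
    proof (rule sum.cong)
      fix x assume x: "x \<in> S"
      then have x1: "x 1 = l1'" by (simp add: S_def box_slice_def)
      have "\<psi> x = real_of_int (x 1) * u 1 + (\<Sum>i=2..d. real_of_int (x i) * u i)"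
        unfolding \<psi>_def psi_def d1 by (simp add: sum.insert)
      then show "(u 1 * real_of_int l1' + (\<Sum>i=2..d. u i * real_of_int (x i))) * \<xi> x = \<xi> x * \<psi> x"
        using x1 by (simp add: mult_ac)
    qed simp
    have "- ln z \<le> - ln z1 - ln z2 - P * (ln C - (\<Sum>i=2..d. V (u i))) - (\<Sum>x\<in>S. \<xi> x * \<psi> x)"
      using lnz Pterm bdb unfolding X_def by linarith
    then show "- ln (Zpart d V (box d a l) (psi d u) \<xi>)
           \<le> - ln (Zpart d V (box_strip d a l (a 1) (l1' - 1)) (psi d u) \<xi>)
             - ln (Zpart d V (box_strip d a l (l1' + 1) (l 1)) (psi d u) \<xi>)
             - (\<Prod>i=2..d. real_of_int (l i - a i + 1)) * (ln C - (\<Sum>i=2..d. V (u i)))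
             - (\<Sum>x\<in>box_slice d a l l1'.
                  (u 1 * real_of_int l1' + (\<Sum>i=2..d. u i * real_of_int (x i))) * \<xi> x)"
      unfolding xisum[unfolded S_def] z_def z1_def z2_def L1_def L2_def P_def \<psi>_def S_def .
  qed
qed

end
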